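(* Let $m\ge 1$ and let $X\subset\sqrt{m}\,\mathbb{S}^{m-1}$ be a spherical $2$-design with $|X|=n$ which is an $s$-distance set and has degree $S=s$, with projection matrices $F_0,\dots,F_s$, normalized Gram matrix $G$ and predegree polynomials $q_0,\dots,q_s$. Then $X$ has the structure of a $Q$-polynomial association scheme with respect to the idempotents $F_0,\dots,F_s$ if and only if $F_s=\frac1n q_s((nG)^\circ)$.
   Context: Setting: $\bm{x}\cdot\bm{y}$ is the standard inner product on $\mathbb{R}^m$; $\sqrt{m}\,\mathbb{S}^{m-1}=\{\bm x\in\mathbb{R}^m:\bm x\cdot\bm x=m\}$; $X$ is a finite subset with $n=|X|$. $A(X)=\{\bm{x}\cdot\bm{y}:\bm{x}\ne\bm{y}\in X\}$, $A'(X)=A(X)\cup\{m\}$; $X$ is an $s$-distance set if $|A(X)|=s$. $X$ is a spherical $2$-design if the average over $X$ of every polynomial of degree at most $2$ equals its average over the sphere (equivalently $\sum_{\bm y\in X}\bm x\cdot\bm y=0$ and $\frac1n\sum_{\bm z}(\bm x\cdot\bm z)(\bm z\cdot\bm y)=\bm x\cdot\bm y$ for all $\bm x,\bm y\in X$). $C(X)$: real functions on $X$ with $(f,g)=\frac1n\sum_{\bm x}f(\bm x)g(\bm x)$. $\zeta_{\bm a}(p)(\bm x)=p(\bm a\cdot\bm x)$. $\mathrm{Pol}_0(X)$ = constants, $\mathrm{Pol}_1(X)=\mathrm{Span}\{\zeta_{\bm a}(p):\bm a\in X,\deg p\le1\}$, $\mathrm{Pol}_k(X)=\mathrm{Span}\{fg:f\in\mathrm{Pol}_1(X),g\in\mathrm{Pol}_{k-1}(X)\}$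 (equivalently $\mathrm{Span}\{\zeta_{\bm a}(p):\deg p\le k\}$). Degree $S=\min\{i:\mathrm{Pol}_i(X)=C(X)\}$. $\mathrm{Harm}_0=\mathrm{Pol}_0$, $\mathrm{Harm}_k=\mathrm{Pol}_k\cap\mathrm{Pol}_{k-1}^\perp$. $F_i$ ($0\le i\le S$) is the $X\times X$ matrix of the orthogonal projection onto $\mathrm{Harm}_i(X)$, matrices acting by $(Mf)(\bm x)=\sum_{\bm y}M_{\bm x,\bm y}f(\bm y)$. $G=\frac1n(\bm x\cdot\bm y)_{\bm x,\bm y\in X}$; $p(M^\circ)$ denotes entrywise application of $p$. $\kappa_\alpha=|\{(\bm x,\bm y)\in X^2:\bm x\cdot\bm y=\alpha\}|$; $\langle p,q\rangle=\frac1{n^2}\sum_{\alpha\in A'(X)}\kappa_\alpha p(\alpha)q(\alpha)$ on $\mathbb{R}[t]/(\prod_{\alpha\in A'(X)}(t-\alpha))$; predegree polynomials $q_0,\dots,q_s$: $\deg q_k=k$, $\langle q_k,q_h\rangle=\delta_{k,h}q_k(m)$. With $R_\alpha=\{(\bm x,\bm y):\bm x\cdot\bm y=\alpha\}$, "$X$ has the structure of a $Q$-polynomial association scheme with respect to the idempotents $F_0,\dots,F_s$" means $(X,\{R_\alpha\}_{\alpha\in A'(X)})$ is a symmetric association scheme with primitive idempotents $F_0,\dots,F_s$ and for each $i$ there is a polynomial $v_i^*$ of degree $i$ with $nF_i=v_i^*((nF_1)^\circ)$. *)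

theory Defs
  imports "HOL-Analysis.Analysis" "HOL-Computational_Algebra.Polynomial"
begin

text \<open>Points live in a Euclidean space of dimension m = DIM('a); X is a finite set of points.
  Functions on X are represented as functions 'a => real vanishing outside X;
  X x X matrices as functions 'a => 'a => real vanishing outside X x X.\<close>

definition on_sphere :: "'a::euclidean_space set \<Rightarrow> bool" where
  "on_sphere X \<longleftrightarrow> (\<forall>x\<in>X. x \<bullet> x = real DIM('a))"

definition Aset :: "'a::euclidean_space set \<Rightarrow> real set" where
  "Aset X = {x \<bullet> y | x y. x \<in> X \<and> y \<in> X \<and> x \<noteq> y}"

definition Aset' :: "'a::euclidean_space set \<Rightarrow> real set" where
  "Aset' X = insert (real DIM('a)) (Aset X)"

definition s_distance :: "'a::euclidean_space set \<Rightarrow> nat \<Rightarrow> bool" where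
  "s_distance X s \<longleftrightarrow> card (Aset X) = s"

text \<open>Spherical 2-design, in the equivalent form given in the paper's setting.\<close>
definition design2 :: "'a::euclidean_space set \<Rightarrow> bool" where
  "design2 X \<longleftrightarrow> finite X \<and> X \<noteq> {} \<and>
     (\<forall>x\<in>X. (\<Sum>y\<in>X. x \<bullet> y) = 0) \<and>
     (\<forall>x\<in>X. \<forall>y\<in>X. (1 / real (card X)) * (\<Sum>z\<in>X. (x \<bullet> z) * (z \<bullet> y)) = x \<bullet> y)"

definition CX :: "'a set \<Rightarrow> ('a \<Rightarrow> real) set" where
  "CX X = {f. \<forall>x. x \<notin> X \<longrightarrow> f x = 0}"

definition ipX :: "'a set \<Rightarrow> ('a \<Rightarrow> real) \<Rightarrow> ('a \<Rightarrow> real) \<Rightarrow> real" where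
  "ipX X f g = (1 / real (card X)) * (\<Sum>x\<in>X. f x * g x)"

text \<open>Pol_k(X) = Span{zeta_a(p) : a in X, deg p <= k}; since zeta_a is linear in p,
  the span is the set of sums over a in X of zeta_a(P a).\<close>
definition Pol :: "'a::euclidean_space set \<Rightarrow> nat \<Rightarrow> ('a \<Rightarrow> real) set" where
  "Pol X k = {f. \<exists>P :: 'a \<Rightarrow> real poly. (\<forall>a\<in>X. degree (P a) \<le> k) \<and>
      f = (\<lambda>x. if x \<in> X then (\<Sum>a\<in>X. poly (P a) (a \<bullet> x)) else 0)}"

definition degX :: "'a::euclidean_space set \<Rightarrow> nat" where
  "degX X = (LEAST i. Pol X i = CX X)"

definition Harm :: "'a::euclidean_space set \<Rightarrow> nat \<Rightarrow> ('a \<Rightarrow> real) set" where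
  "Harm X k = (if k = 0 then Pol X 0
     else {f \<in> Pol X k. \<forall>g\<in>Pol X (k - 1). ipX X f g = 0})"

definition matact :: "'a set \<Rightarrow> ('a \<Rightarrow> 'a \<Rightarrow> real) \<Rightarrow> ('a \<Rightarrow> real) \<Rightarrow> ('a \<Rightarrow> real)" where
  "matact X M f = (\<lambda>x. if x \<in> X then (\<Sum>y\<in>X. M x y * f y) else 0)"

definition is_matrix :: "'a set \<Rightarrow> ('a \<Rightarrow> 'a \<Rightarrow> real) \<Rightarrow> bool" where
  "is_matrix X M \<longleftrightarrow> (\<forall>x y. x \<notin> X \<or> y \<notin> X \<longrightarrow> M x y = 0)"

definition Fproj :: "'a::euclidean_space set \<Rightarrow> nat \<Rightarrow> ('a \<Rightarrow> 'a \<Rightarrow> real)" where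
  "Fproj X i = (THE M. is_matrix X M \<and>
     (\<forall>f\<in>CX X. matact X M f \<in> Harm X i \<and>
        (\<forall>g\<in>Harm X i. ipX X (\<lambda>x. f x - matact X M f x) g = 0)))"

definition Gram :: "'a::euclidean_space set \<Rightarrow> ('a \<Rightarrow> 'a \<Rightarrow> real)" where
  "Gram X = (\<lambda>x y. if x \<in> X \<and> y \<in> X then (x \<bullet> y) / real (card X) else 0)"

definition kappa :: "'a::euclidean_space set \<Rightarrow> real \<Rightarrow> nat" where
  "kappa X \<alpha> = card {(x, y). x \<in> X \<and> y \<in> X \<and> x \<bullet> y = \<alpha>}"

definition ip_poly :: "'a::euclidean_space set \<Rightarrow> real poly \<Rightarrow> real poly \<Rightarrow> real" where
  "ip_poly X p q = (1 / (real (card X))^2) *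
     (\<Sum>\<alpha>\<in>Aset' X. real (kappa X \<alpha>) * poly p \<alpha> * poly q \<alpha>)"

definition predegree :: "'a::euclidean_space set \<Rightarrow> nat \<Rightarrow> (nat \<Rightarrow> real poly) \<Rightarrow> bool" where
  "predegree X s q \<longleftrightarrow>
     (\<forall>k\<le>s. q k \<noteq> 0 \<and> degree (q k) = k) \<and>
     (\<forall>k\<le>s. \<forall>h\<le>s. ip_poly X (q k) (q h) =
        (if k = h then poly (q k) (real DIM('a)) else 0))"

definition Rel :: "'a::euclidean_space set \<Rightarrow> real \<Rightarrow> ('a \<times> 'a) set" where
  "Rel X \<alpha> = {(x, y). x \<in> X \<and> y \<in> X \<and> x \<bullet> y = \<alpha>}"

definition sym_assoc_scheme :: "'a set \<Rightarrow> real set \<Rightarrow> (real \<Rightarrow> ('a \<times> 'a) set) \<Rightarrow> bool" where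
  "sym_assoc_scheme X I R \<longleftrightarrow> finite X \<and> finite I \<and>
     (\<forall>\<alpha>\<in>I. R \<alpha> \<subseteq> X \<times> X \<and> R \<alpha> \<noteq> {}) \<and>
     (\<forall>x\<in>X. \<forall>y\<in>X. \<exists>!\<alpha>. \<alpha> \<in> I \<and> (x, y) \<in> R \<alpha>) \<and>
     (\<exists>\<alpha>\<in>I. R \<alpha> = Id_on X) \<and>
     (\<forall>\<alpha>\<in>I. \<forall>x y. (x, y) \<in> R \<alpha> \<longrightarrow> (y, x) \<in> R \<alpha>) \<and>
     (\<forall>\<alpha>\<in>I. \<forall>\<beta>\<in>I. \<forall>\<gamma>\<in>I. \<exists>p::nat. \<forall>x y. (x, y) \<in> R \<gamma> \<longrightarrow>
        card {z \<in> X. (x, z) \<in> R \<alpha> \<and> (z, y) \<in> R \<beta>} = p)"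

definition adj :: "'a set \<Rightarrow> ('a \<times> 'a) set \<Rightarrow> ('a \<Rightarrow> 'a \<Rightarrow> real)" where
  "adj X r = (\<lambda>x y. if x \<in> X \<and> y \<in> X \<and> (x, y) \<in> r then 1 else 0)"

definition mmul :: "'a set \<Rightarrow> ('a \<Rightarrow> 'a \<Rightarrow> real) \<Rightarrow> ('a \<Rightarrow> 'a \<Rightarrow> real) \<Rightarrow> ('a \<Rightarrow> 'a \<Rightarrow> real)" where
  "mmul X M N = (\<lambda>x y. \<Sum>z\<in>X. M x z * N z y)"

definition bose_mesner :: "'a set \<Rightarrow> real set \<Rightarrow> (real \<Rightarrow> ('a \<times> 'a) set) \<Rightarrow> ('a \<Rightarrow> 'a \<Rightarrow> real) set" where
  "bose_mesner X I R = {M. \<exists>c :: real \<Rightarrow> real.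
      M = (\<lambda>x y. \<Sum>\<alpha>\<in>I. c \<alpha> * adj X (R \<alpha>) x y)}"

definition idem :: "'a set \<Rightarrow> ('a \<Rightarrow> 'a \<Rightarrow> real) \<Rightarrow> bool" where
  "idem X E \<longleftrightarrow> mmul X E E = E"

definition primitive_idempotents :: "'a set \<Rightarrow> real set \<Rightarrow> (real \<Rightarrow> ('a \<times> 'a) set) \<Rightarrow> ('a \<Rightarrow> 'a \<Rightarrow> real) set" where
  "primitive_idempotents X I R = {E \<in> bose_mesner X I R. idem X E \<and> E \<noteq> (\<lambda>x y. 0) \<and>
     \<not> (\<exists>E1\<in>bose_mesner X I R. \<exists>E2\<in>bose_mesner X I R.
          idem X E1 \<and> idem X E2 \<and> E1 \<noteq> (\<lambda>x y. 0) \<and> E2 \<noteq> (\<lambda>x y. 0) \<and>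
          mmul X E1 E2 = (\<lambda>x y. 0) \<and> E = (\<lambda>x y. E1 x y + E2 x y))}"

definition Q_poly_scheme :: "'a::euclidean_space set \<Rightarrow> nat \<Rightarrow> bool" where
  "Q_poly_scheme X s \<longleftrightarrow>
     sym_assoc_scheme X (Aset' X) (Rel X) \<and>
     primitive_idempotents X (Aset' X) (Rel X) = Fproj X ` {0..s} \<and>
     (\<forall>i\<le>s. \<exists>v :: real poly. degree v = i \<and>
        (\<forall>x\<in>X. \<forall>y\<in>X. real (card X) * Fproj X i x y =
                         poly v (real (card X) * Fproj X 1 x y)))"

end

theory Submission
  imports Defs "HOL-Library.FuncSet"
begin


locale setting =
  fixes X :: "'a::euclidean_space set" and s :: nat and q :: "nat \<Rightarrow> real poly"
  assumes dimpos: "DIM('a) \<ge> 1"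
    and fin: "finite X" and sph: "on_sphere X"
    and des: "design2 X" and sd: "s_distance X s" and pre: "predegree X s q"
begin

lemma nonempty: "X \<noteq> {}" using des by (simp add: design2_def)

lemma npos: "card X > 0" using nonempty fin by (simp add: card_gt_0_iff)

lemma inner_self_m: "x \<in> X \<Longrightarrow> x \<bullet> x = real DIM('a)"
  using sph by (simp add: on_sphere_def)

lemma eq_m_iff: "x \<in> X \<Longrightarrow> y \<in> X \<Longrightarrow> x \<bullet> y = real DIM('a) \<longleftrightarrow> x = y"
proof
  assume xy: "x \<in> X" "y \<in> X" and e: "x \<bullet> y = real DIM('a)"
  have "(x - y) \<bullet> (x - y) = x \<bullet> x - 2 * (x \<bullet> y) + y \<bullet> y"
    by (simp add: inner_diff_left inner_diff_right inner_commute)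
  also have "\<dots> = 0" using xy e inner_self_m by simp
  finally show "x = y" by simp
qed (simp add: inner_self_m)

lemma m_notin: "real DIM('a) \<notin> Aset X"
  by (auto simp: Aset_def) (metis eq_m_iff)

lemma finite_Aset: "finite (Aset X)"
proof -
  have "Aset X \<subseteq> (\<lambda>(x,y). x \<bullet> y) ` (X \<times> X)" by (auto simp: Aset_def)
  thus ?thesis using fin by (meson finite_SigmaI finite_imageI finite_subset)
qed

lemma finite_A': "finite (Aset' X)" using finite_Aset by (simp add: Aset'_def)

lemma card_A': "card (Aset' X) = Suc s"
  using finite_Aset m_notin sd by (simp add: Aset'_def s_distance_def)

lemma inner_in_A': "x \<in> X \<Longrightarrow> y \<in> X \<Longrightarrow> x \<bullet> y \<in> Aset' X"
  using eq_m_iff by (auto simp: Aset'_def Aset_def)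

lemma A'_real: "\<alpha> \<in> Aset' X \<Longrightarrow> \<exists>x\<in>X. \<exists>y\<in>X. x \<bullet> y = \<alpha>"
  using nonempty inner_self_m by (auto simp: Aset'_def Aset_def)

lemma sum_A'_pairs:
  "(\<Sum>\<alpha>\<in>Aset' X. real (kappa X \<alpha>) * f \<alpha>) = (\<Sum>x\<in>X. \<Sum>y\<in>X. f (x \<bullet> y))"
proof -
  let ?g = "\<lambda>(x::'a,y). x \<bullet> y"
  have "(\<Sum>\<alpha>\<in>Aset' X. real (kappa X \<alpha>) * f \<alpha>)
      = (\<Sum>\<alpha>\<in>Aset' X. \<Sum>pr\<in>{pr. pr \<in> X \<times> X \<and> ?g pr = \<alpha>}. f (?g pr))"
  proof (rule sum.cong[OF refl])
    fix \<alpha> assume "\<alpha> \<in> Aset' X"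
    have e: "{(x, y). x \<in> X \<and> y \<in> X \<and> x \<bullet> y = \<alpha>} = {pr. pr \<in> X \<times> X \<and> ?g pr = \<alpha>}" by auto
    have "(\<Sum>pr\<in>{pr. pr \<in> X \<times> X \<and> ?g pr = \<alpha>}. f (?g pr)) = (\<Sum>pr\<in>{pr. pr \<in> X \<times> X \<and> ?g pr = \<alpha>}. f \<alpha>)"
      by (rule sum.cong) auto
    thus "real (kappa X \<alpha>) * f \<alpha> = (\<Sum>pr\<in>{pr. pr \<in> X \<times> X \<and> ?g pr = \<alpha>}. f (?g pr))"
      by (simp add: kappa_def e)
  qed
  also have "\<dots> = (\<Sum>pr\<in>X\<times>X. f (?g pr))"
    by (rule sum.group) (use fin finite_A' inner_in_A' in auto)
  also have "\<dots> = (\<Sum>x\<in>X. \<Sum>y\<in>X. f (x \<bullet> y))"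
    by (subst sum.cartesian_product) (simp add: case_prod_unfold)
  finally show ?thesis .
qed

definition pp :: "real poly \<Rightarrow> real poly \<Rightarrow> real" where
  "pp p r = (\<Sum>x\<in>X. \<Sum>y\<in>X. poly p (x \<bullet> y) * poly r (x \<bullet> y))"

lemma ip_poly_pp: "ip_poly X p r = pp p r / (real (card X))^2"
  unfolding ip_poly_def pp_def using sum_A'_pairs[of "\<lambda>\<alpha>. poly p \<alpha> * poly r \<alpha>"]
  by (simp add: mult.assoc)

lemma pp_q: "k \<le> s \<Longrightarrow> h \<le> s \<Longrightarrow>
   pp (q k) (q h) = (if k = h then (real (card X))^2 * poly (q k) (real DIM('a)) else 0)"
  using pre npos unfolding predegree_def ip_poly_pp by (auto simp: field_simps)

lemma q_deg: "k \<le> s \<Longrightarrow> degree (q k) = k" using pre by (simp add: predegree_def)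
lemma q_nz: "k \<le> s \<Longrightarrow> q k \<noteq> 0" using pre by (simp add: predegree_def)

lemma pp_sym: "pp p r = pp r p" by (simp add: pp_def mult.commute)

lemma pp_add_left: "pp (p1 + p2) r = pp p1 r + pp p2 r"
  by (simp add: pp_def algebra_simps sum.distrib)

lemma pp_smult_left: "pp (smult c p) r = c * pp p r"
  by (simp add: pp_def sum_distrib_left mult.assoc)

lemma pp_zero_left[simp]: "pp 0 r = 0" by (simp add: pp_def)

lemma pp_sum_left: "finite I \<Longrightarrow> pp (\<Sum>i\<in>I. f i) r = (\<Sum>i\<in>I. pp (f i) r)"
  by (induct I rule: finite_induct) (simp_all add: pp_add_left)

lemma pp_nonneg: "pp p p \<ge> 0"
  unfolding pp_def by (intro sum_nonneg) auto

lemma pp_zero_vanish: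
  assumes "pp p p = 0" "\<alpha> \<in> Aset' X" shows "poly p \<alpha> = 0"
proof -
  obtain x y where xy: "x \<in> X" "y \<in> X" "x \<bullet> y = \<alpha>" using A'_real assms(2) by blast
  have nn: "\<And>x. (\<Sum>y\<in>X. poly p (x \<bullet> y) * poly p (x \<bullet> y)) \<ge> 0"
    by (intro sum_nonneg) auto
  have "(\<Sum>y\<in>X. poly p (x \<bullet> y) * poly p (x \<bullet> y)) = 0"
    using assms(1) xy(1) sum_nonneg_eq_0_iff[OF fin, of "\<lambda>x. (\<Sum>y\<in>X. poly p (x \<bullet> y) * poly p (x \<bullet> y))"] nn
    unfolding pp_def by blast
  hence "poly p (x \<bullet> y) * poly p (x \<bullet> y) = 0"
    using sum_nonneg_eq_0_iff[OF fin, of "\<lambda>y. poly p (x \<bullet> y) * poly p (x \<bullet> y)"] xy(2) by auto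
  thus ?thesis using xy by simp
qed

lemma vanish_zero:
  assumes "degree p \<le> s" "\<And>\<alpha>. \<alpha> \<in> Aset' X \<Longrightarrow> poly p \<alpha> = 0" shows "p = 0"
  using poly_eqI_degree[of "Aset' X" p 0] assms card_A' by auto

lemma pp_zero_iff: "degree p \<le> s \<Longrightarrow> pp p p = 0 \<longleftrightarrow> p = 0"
  using pp_zero_vanish vanish_zero by (auto simp: pp_def)

lemma pp_pos: "degree p \<le> s \<Longrightarrow> p \<noteq> 0 \<Longrightarrow> pp p p > 0"
  using pp_zero_iff pp_nonneg by (metis less_eq_real_def)

lemma qm_pos: "k \<le> s \<Longrightarrow> poly (q k) (real DIM('a)) > 0"
  using pp_pos[of "q k"] pp_q[of k k] q_deg q_nz npos by (auto simp: zero_less_mult_iff)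

end


context setting
begin

lemma pairsum_sq_zero:
  fixes f :: "real \<Rightarrow> real"
  assumes "(\<Sum>x\<in>X. \<Sum>y\<in>X. f (x \<bullet> y) * f (x \<bullet> y)) = 0" "\<alpha> \<in> Aset' X"
  shows "f \<alpha> = 0"
proof -
  obtain x y where xy: "x \<in> X" "y \<in> X" "x \<bullet> y = \<alpha>" using A'_real assms(2) by blast
  have nn: "\<And>x. (\<Sum>y\<in>X. f (x \<bullet> y) * f (x \<bullet> y)) \<ge> 0"
    by (intro sum_nonneg) auto
  have "(\<Sum>y\<in>X. f (x \<bullet> y) * f (x \<bullet> y)) = 0"
    using assms(1) xy(1) sum_nonneg_eq_0_iff[OF fin, of "\<lambda>x. (\<Sum>y\<in>X. f (x \<bullet> y) * f (x \<bullet> y))"] nn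
    by blast
  hence "f (x \<bullet> y) * f (x \<bullet> y) = 0"
    using sum_nonneg_eq_0_iff[OF fin, of "\<lambda>y. f (x \<bullet> y) * f (x \<bullet> y)"] xy(2) by auto
  thus ?thesis using xy by simp
qed

lemma expand_q:
  assumes "k \<le> s" "degree p \<le> k"
  shows "\<exists>c. p = (\<Sum>j\<le>k. smult (c j) (q j))"
  using assms
proof (induction k arbitrary: p)
  case 0
  have q0: "q 0 = [:coeff (q 0) 0:]" using q_deg[of 0] degree_0_id by (metis le0)
  have "coeff (q 0) 0 \<noteq> 0" using q_nz[of 0] q0 by (metis pCons_0_0 le0)
  moreover have "p = [:coeff p 0:]" using 0 degree_0_id by (metis le_zero_eq)
  ultimately have "p = smult (coeff p 0 / coeff (q 0) 0) (q 0)"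
    by (subst q0) simp
  thus ?case by (intro exI[of _ "\<lambda>_. coeff p 0 / coeff (q 0) 0"]) simp
next
  case (Suc k)
  define c where "c = coeff p (Suc k) / lead_coeff (q (Suc k))"
  define r where "r = p - smult c (q (Suc k))"
  have dq: "degree (q (Suc k)) = Suc k" using q_deg Suc by auto
  have lq: "lead_coeff (q (Suc k)) \<noteq> 0" using q_nz Suc by auto
  have "degree r \<le> k"
  proof (rule degree_le, intro allI impI)
    fix i assume "k < i"
    show "coeff r i = 0"
    proof (cases "i = Suc k")
      case True thus ?thesis using lq dq by (simp add: r_def c_def)
    next
      case False
      hence "i > Suc k" using \<open>k < i\<close> by simp
      thus ?thesis using Suc(3) dq by (simp add: r_def coeff_eq_0)
    qed
  qed
  then obtain d where d: "r = (\<Sum>j\<le>k. smult (d j) (q j))" using Suc by auto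
  have "p = r + smult c (q (Suc k))" by (simp add: r_def)
  also have "\<dots> = (\<Sum>j\<le>Suc k. smult ((d(Suc k := c)) j) (q j))"
    by (simp add: d)
  finally show ?case by blast
qed

lemma pp_expand:
  assumes "i \<le> s" "k \<le> s"
  shows "pp (\<Sum>j\<le>k. smult (c j) (q j)) (q i) =
     (if i \<le> k then c i * (real (card X))^2 * poly (q i) (real DIM('a)) else 0)"
proof -
  have "pp (\<Sum>j\<le>k. smult (c j) (q j)) (q i) = (\<Sum>j\<le>k. c j * pp (q j) (q i))"
    by (simp add: pp_sum_left pp_smult_left)
  also have "\<dots> = (\<Sum>j\<le>k. if j = i then c i * ((real (card X))^2 * poly (q i) (real DIM('a))) else 0)"
    by (rule sum.cong) (use assms in \<open>auto simp: pp_q\<close>)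
  also have "\<dots> = (if i \<le> k then c i * (real (card X))^2 * poly (q i) (real DIM('a)) else 0)"
    by (subst sum.delta) auto
  finally show ?thesis .
qed

lemma pp_q_low:
  assumes "i \<le> s" "degree p < i"
  shows "pp p (q i) = 0"
proof -
  obtain c where "p = (\<Sum>j\<le>degree p. smult (c j) (q j))"
    using expand_q[of "degree p" p] assms by auto
  thus ?thesis using pp_expand[of i "degree p" c] assms by auto
qed

lemma lagrange:
  fixes A :: "real set"
  assumes "finite A"
  shows "\<exists>w. degree w \<le> card A - 1 \<and> (\<forall>\<alpha>\<in>A. poly w \<alpha> = h \<alpha>)"
  using assms
proof (induction A rule: finite_induct)
  case empty thus ?case by (intro exI[of _ 0]) auto
next
  case (insert a A)
  then obtain w where w: "degree w \<le> card A - 1" "\<forall>\<alpha>\<in>A. poly w \<alpha> = h \<alpha>" by blast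
  define Z where "Z = (\<Prod>\<beta>\<in>A. [:-\<beta>, 1:])"
  have pZ: "poly Z \<alpha> = (\<Prod>\<beta>\<in>A. \<alpha> - \<beta>)" for \<alpha> by (simp add: Z_def poly_prod)
  have Za: "poly Z a \<noteq> 0" using insert by (simp add: pZ)
  have Zb: "\<alpha> \<in> A \<Longrightarrow> poly Z \<alpha> = 0" for \<alpha> using insert by (simp add: pZ prod_zero_iff)
  have dZ: "degree Z \<le> card A"
  proof -
    have "degree Z \<le> sum (degree \<circ> (\<lambda>\<beta>. [:-\<beta>, 1:])) A"
      unfolding Z_def by (rule degree_prod_sum_le) fact
    also have "\<dots> = card A" by simp
    finally show ?thesis .
  qed
  define w' where "w' = w + smult ((h a - poly w a) / poly Z a) Z"
  have "degree w' \<le> max (degree w) (degree (smult ((h a - poly w a) / poly Z a) Z))"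
    unfolding w'_def by (rule degree_add_le_max)
  also have "\<dots> \<le> card A"
  proof -
    have "degree (smult ((h a - poly w a) / poly Z a) Z) \<le> card A"
      using degree_smult_le[of _ Z] dZ by (rule order_trans)
    moreover have "degree w \<le> card A" using w(1) by linarith
    ultimately show ?thesis by simp
  qed
  finally have "degree w' \<le> card (insert a A) - 1" using insert by simp
  moreover have "\<forall>\<alpha>\<in>insert a A. poly w' \<alpha> = h \<alpha>"
    using w Za Zb by (auto simp: w'_def)
  ultimately show ?case by blast
qed

lemma interp_A':
  "\<exists>w. degree w \<le> s \<and> (\<forall>\<alpha>\<in>Aset' X. poly w \<alpha> = h \<alpha>)"
  using lagrange[OF finite_A', of h] card_A' by auto

lemma kappa_m: "(\<Sum>x\<in>X. \<Sum>y\<in>X. (if x = y then f x y else 0)) = (\<Sum>x\<in>X. f x x)"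
  using fin by (simp add: sum.delta)

lemma sum_q:
  assumes "x \<in> X" "y \<in> X"
  shows "(\<Sum>j\<le>s. poly (q j) (x \<bullet> y)) = (if x = y then real (card X) else 0)"
proof -
  define r where "r = (\<Sum>j\<le>s. q j)"
  define h where "h = (\<lambda>\<alpha>. poly r \<alpha> - (if \<alpha> = real DIM('a) then real (card X) else 0))"
  obtain w where w: "degree w \<le> s" "\<forall>\<alpha>\<in>Aset' X. poly w \<alpha> = h \<alpha>" using interp_A' by blast
  obtain c where c: "w = (\<Sum>j\<le>s. smult (c j) (q j))" using expand_q[OF le_refl w(1)] by blast
  have hq: "(\<Sum>x\<in>X. \<Sum>y\<in>X. h (x \<bullet> y) * poly (q j) (x \<bullet> y)) = 0" if "j \<le> s" for j
  proof -
    have e1: "h (x \<bullet> y) * poly (q j) (x \<bullet> y) = poly r (x \<bullet> y) * poly (q j) (x \<bullet> y)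
        - (if x = y then real (card X) * poly (q j) (real DIM('a)) else 0)" if "x \<in> X" "y \<in> X" for x y
      using that eq_m_iff[OF that] inner_self_m[OF that(1)] by (auto simp: h_def algebra_simps)
    have "(\<Sum>x\<in>X. \<Sum>y\<in>X. h (x \<bullet> y) * poly (q j) (x \<bullet> y))
       = (\<Sum>x\<in>X. \<Sum>y\<in>X. poly r (x \<bullet> y) * poly (q j) (x \<bullet> y)
        - (if x = y then real (card X) * poly (q j) (real DIM('a)) else 0))"
      by (intro sum.cong refl) (simp add: e1)
    also have "\<dots> = pp r (q j) - (\<Sum>x\<in>X. \<Sum>y\<in>X. (if x = y then real (card X) * poly (q j) (real DIM('a)) else 0))"
      unfolding pp_def by (simp only: sum_subtractf)
    also have "pp r (q j) = (real (card X))^2 * poly (q j) (real DIM('a))"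
      using pp_expand[of j s "\<lambda>_. 1"] that by (simp add: r_def)
    also have "(\<Sum>x\<in>X. \<Sum>y\<in>X. (if x = y then real (card X) * poly (q j) (real DIM('a)) else 0))
       = (real (card X))^2 * poly (q j) (real DIM('a))"
      by (subst kappa_m) (simp add: power2_eq_square)
    finally show ?thesis by simp
  qed
  have "(\<Sum>x\<in>X. \<Sum>y\<in>X. h (x \<bullet> y) * h (x \<bullet> y)) = (\<Sum>x\<in>X. \<Sum>y\<in>X. h (x \<bullet> y) * poly w (x \<bullet> y))"
    using w(2) inner_in_A' by (intro sum.cong refl) auto
  also have "\<dots> = (\<Sum>x\<in>X. \<Sum>y\<in>X. \<Sum>j\<le>s. c j * (h (x \<bullet> y) * poly (q j) (x \<bullet> y)))"
    by (intro sum.cong refl) (simp add: c poly_sum sum_distrib_left mult.left_commute)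
  also have "\<dots> = (\<Sum>j\<le>s. c j * (\<Sum>x\<in>X. \<Sum>y\<in>X. h (x \<bullet> y) * poly (q j) (x \<bullet> y)))"
    by (simp only: sum_distrib_left) (subst sum.swap, rule sum.cong, rule refl, subst sum.swap, rule refl)
  also have "\<dots> = 0" using hq by simp
  finally have "h (x \<bullet> y) = 0" using pairsum_sq_zero inner_in_A' assms by blast
  thus ?thesis using assms eq_m_iff by (auto simp: h_def r_def poly_sum)
qed

end


definition ip :: "'a set \<Rightarrow> ('a \<Rightarrow> real) \<Rightarrow> ('a \<Rightarrow> real) \<Rightarrow> real" where
  "ip X f g = (\<Sum>x\<in>X. f x * g x)"

definition LS :: "'a set \<Rightarrow> 'i set \<Rightarrow> ('i \<Rightarrow> 'a \<Rightarrow> real) \<Rightarrow> ('a \<Rightarrow> real) set" where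
  "LS X I \<phi> = {f. \<exists>c. f = (\<lambda>x. if x \<in> X then \<Sum>i\<in>I. c i * \<phi> i x else 0)}"

lemma ip_cong: "(\<And>x. x \<in> X \<Longrightarrow> f x = f' x) \<Longrightarrow> (\<And>x. x \<in> X \<Longrightarrow> g x = g' x) \<Longrightarrow> ip X f g = ip X f' g'"
  by (simp add: ip_def)

lemma ip_sym: "ip X f g = ip X g f" by (simp add: ip_def mult.commute)

lemma ip_lin_left: "ip X (\<lambda>x. a * f x + b * g x) h = a * ip X f h + b * ip X g h"
  by (simp add: ip_def algebra_simps sum.distrib sum_distrib_left)

lemma ip_diff_left: "ip X (\<lambda>x. f x - g x) h = ip X f h - ip X g h"
  by (simp add: ip_def algebra_simps sum_subtractf)

lemma ip_diff_right: "ip X h (\<lambda>x. f x - g x) = ip X h f - ip X h g"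
  by (simp add: ip_def algebra_simps sum_subtractf)

lemma ip_add_right: "ip X h (\<lambda>x. f x + g x) = ip X h f + ip X h g"
  by (simp add: ip_def algebra_simps sum.distrib)

lemma ip_scale_left: "ip X (\<lambda>x. a * f x) h = a * ip X f h"
  by (simp add: ip_def algebra_simps sum_distrib_left)

lemma ip_scale_right: "ip X h (\<lambda>x. a * f x) = a * ip X h f"
  by (simp add: ip_def algebra_simps sum_distrib_left)

lemma ip_sum_right: "finite I \<Longrightarrow> ip X h (\<lambda>x. \<Sum>i\<in>I. f i x) = (\<Sum>i\<in>I. ip X h (f i))"
  by (simp add: ip_def sum_distrib_left) (rule sum.swap)

lemma ip_self_zero: "finite X \<Longrightarrow> ip X f f = 0 \<Longrightarrow> x \<in> X \<Longrightarrow> f x = 0"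
  unfolding ip_def using sum_nonneg_eq_0_iff[of X "\<lambda>x. f x * f x"] by auto

lemma ip_self_nonneg: "ip X f f \<ge> 0"
  unfolding ip_def by (intro sum_nonneg) auto

lemma LS_zero_out: "f \<in> LS X I \<phi> \<Longrightarrow> x \<notin> X \<Longrightarrow> f x = 0"
  by (auto simp: LS_def)

lemma LS_0: "(\<lambda>x. 0) \<in> LS X I \<phi>"
  unfolding LS_def by (rule CollectI, rule exI[of _ "\<lambda>_. 0"]) auto

lemma LS_lin:
  assumes "f \<in> LS X I \<phi>" "g \<in> LS X I \<phi>"
  shows "(\<lambda>x. a * f x + b * g x) \<in> LS X I \<phi>"
proof -
  obtain c d where c: "f = (\<lambda>x. if x \<in> X then \<Sum>i\<in>I. c i * \<phi> i x else 0)"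
     and d: "g = (\<lambda>x. if x \<in> X then \<Sum>i\<in>I. d i * \<phi> i x else 0)" using assms by (auto simp: LS_def)
  show ?thesis unfolding LS_def
    by (rule CollectI, rule exI[of _ "\<lambda>i. a * c i + b * d i"])
       (auto simp: c d sum_distrib_left sum.distrib algebra_simps)
qed

lemma LS_add: "f \<in> LS X I \<phi> \<Longrightarrow> g \<in> LS X I \<phi> \<Longrightarrow> (\<lambda>x. f x + g x) \<in> LS X I \<phi>"
  using LS_lin[of f X I \<phi> g 1 1] by simp

lemma LS_diff: "f \<in> LS X I \<phi> \<Longrightarrow> g \<in> LS X I \<phi> \<Longrightarrow> (\<lambda>x. f x - g x) \<in> LS X I \<phi>"
  using LS_lin[of f X I \<phi> g 1 "-1"] by simp

lemma LS_scale: "f \<in> LS X I \<phi> \<Longrightarrow> (\<lambda>x. a * f x) \<in> LS X I \<phi>"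
  using LS_lin[of f X I \<phi> f a 0] by simp

lemma LS_sum: "finite J \<Longrightarrow> (\<And>j. j \<in> J \<Longrightarrow> f j \<in> LS X I \<phi>) \<Longrightarrow> (\<lambda>x. \<Sum>j\<in>J. f j x) \<in> LS X I \<phi>"
  by (induct J rule: finite_induct) (auto simp: LS_0 LS_add)

lemma LS_mono: "finite J \<Longrightarrow> I \<subseteq> J \<Longrightarrow> LS X I \<phi> \<subseteq> LS X J \<phi>"
proof
  fix f assume "finite J" "I \<subseteq> J" "f \<in> LS X I \<phi>"
  then obtain c where c: "f = (\<lambda>x. if x \<in> X then \<Sum>i\<in>I. c i * \<phi> i x else 0)" by (auto simp: LS_def)
  have "(\<Sum>i\<in>J. (if i \<in> I then c i else 0) * \<phi> i x) = (\<Sum>i\<in>I. c i * \<phi> i x)" for x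
  proof -
    have "(\<Sum>i\<in>J. (if i \<in> I then c i else 0) * \<phi> i x) = (\<Sum>i\<in>J. if i \<in> I then c i * \<phi> i x else 0)"
      by (rule sum.cong) auto
    also have "\<dots> = (\<Sum>i\<in>J \<inter> I. c i * \<phi> i x)" using \<open>finite J\<close> by (simp add: sum.inter_restrict)
    also have "J \<inter> I = I" using \<open>I \<subseteq> J\<close> by blast
    finally show ?thesis .
  qed
  thus "f \<in> LS X J \<phi>" unfolding LS_def c
    by (intro CollectI exI[of _ "\<lambda>i. if i \<in> I then c i else 0"]) auto
qed

lemma sum_delta_mult: "finite I \<Longrightarrow> (\<Sum>j\<in>I. (if j = i then 1 else 0) * (f j::real)) = (if i \<in> I then f i else 0)"
proof -
  assume "finite I"
  have "(\<Sum>j\<in>I. (if j = i then 1 else 0) * f j) = (\<Sum>j\<in>I. if j = i then f j else 0)" by (rule sum.cong) auto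
  thus ?thesis using \<open>finite I\<close> by (simp add: sum.delta')
qed

lemma LS_gen: "finite I \<Longrightarrow> i \<in> I \<Longrightarrow> (\<lambda>x. if x \<in> X then \<phi> i x else 0) \<in> LS X I \<phi>"
  unfolding LS_def by (intro CollectI exI[of _ "\<lambda>j. if j = i then 1 else 0"]) (auto simp: sum_delta_mult)

lemma matact_out: "x \<notin> X \<Longrightarrow> matact X M f x = 0" by (simp add: matact_def)

definition projprop :: "'a set \<Rightarrow> ('a \<Rightarrow> real) set \<Rightarrow> ('a \<Rightarrow> 'a \<Rightarrow> real) \<Rightarrow> bool" where
  "projprop X H M \<longleftrightarrow> is_matrix X M \<and>
     (\<forall>f. matact X M f \<in> H \<and> (\<forall>g\<in>H. ip X (\<lambda>x. f x - matact X M f x) g = 0))"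

lemma gram_schmidt:
  assumes "finite X" "finite I"
  shows "\<exists>M. projprop X (LS X I \<phi>) M"
  using assms(2)
proof (induction I rule: finite_induct)
  case empty
  have "LS X {} \<phi> = {\<lambda>x. 0}" by (auto simp: LS_def fun_eq_iff)
  moreover have "matact X (\<lambda>x y. 0) f = (\<lambda>x. 0)" for f by (auto simp: matact_def)
  ultimately show ?case
    by (intro exI[of _ "\<lambda>x y. 0"]) (auto simp: projprop_def is_matrix_def ip_def)
next
  case (insert i I)
  then obtain M where M: "projprop X (LS X I \<phi>) M" by blast
  have Mmat: "is_matrix X M" and Min: "\<And>f. matact X M f \<in> LS X I \<phi>"
    and Mort: "\<And>f g. g \<in> LS X I \<phi> \<Longrightarrow> ip X (\<lambda>x. f x - matact X M f x) g = 0"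
    using M by (auto simp: projprop_def)
  define v where "v = (\<lambda>x. if x \<in> X then \<phi> i x else 0)"
  define u where "u = (\<lambda>x. v x - matact X M v x)"
  have uout: "x \<notin> X \<Longrightarrow> u x = 0" for x by (simp add: u_def v_def matact_def)
  obtain d where d: "matact X M v = (\<lambda>x. if x \<in> X then \<Sum>j\<in>I. d j * \<phi> j x else 0)"
    using Min[of v] by (auto simp: LS_def)
  have uI: "ip X u g = 0" if "g \<in> LS X I \<phi>" for g using Mort[OF that, of v] by (simp add: u_def)
  have decomp: "\<exists>c0 g0. g0 \<in> LS X I \<phi> \<and> (\<forall>x\<in>X. g x = c0 * v x + g0 x)" if gin: "g \<in> LS X (insert i I) \<phi>" for g
  proof -
    obtain c where c: "g = (\<lambda>x. if x \<in> X then \<Sum>j\<in>insert i I. c j * \<phi> j x else 0)"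
      using gin unfolding LS_def by blast
    show ?thesis
      by (rule exI[of _ "c i"], rule exI[of _ "\<lambda>x. if x \<in> X then \<Sum>j\<in>I. c j * \<phi> j x else 0"])
         (auto simp: c v_def LS_def insert)
  qed
  show ?case
  proof (cases "ip X u u = 0")
    case True
    hence u0: "x \<in> X \<Longrightarrow> u x = 0" for x using ip_self_zero[OF assms(1)] by blast
    have sub: "LS X (insert i I) \<phi> \<subseteq> LS X I \<phi>"
    proof
      fix g assume "g \<in> LS X (insert i I) \<phi>"
      then obtain c0 g0 where g0: "g0 \<in> LS X I \<phi>" "\<forall>x\<in>X. g x = c0 * v x + g0 x" using decomp by blast
      have "g = (\<lambda>x. c0 * matact X M v x + 1 * g0 x)"
      proof
        fix x show "g x = c0 * matact X M v x + 1 * g0 x"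
        proof (cases "x \<in> X")
          case True thus ?thesis using g0 u0[OF True] by (simp add: u_def)
        next
          case False
          have "g x = 0" using \<open>g \<in> LS X (insert i I) \<phi>\<close> False by (rule LS_zero_out)
          thus ?thesis using False LS_zero_out[OF g0(1) False] by (simp add: matact_def)
        qed
      qed
      thus "g \<in> LS X I \<phi>" using LS_lin[OF Min g0(1)] by metis
    qed
    have "LS X I \<phi> \<subseteq> LS X (insert i I) \<phi>" using insert by (intro LS_mono) auto
    hence "LS X (insert i I) \<phi> = LS X I \<phi>" using sub by blast
    thus ?thesis using M by auto
  next
    case False
    define M' where "M' = (\<lambda>x y. M x y + u x * u y / ip X u u)"
    have act: "matact X M' f = (\<lambda>x. matact X M f x + (ip X u f / ip X u u) * u x)" for f
    proof
      fix x show "matact X M' f x = matact X M f x + (ip X u f / ip X u u) * u x"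
        by (cases "x \<in> X") (auto simp: matact_def M'_def uout algebra_simps sum.distrib
              sum_divide_distrib sum_distrib_left ip_def)
    qed
    have mat: "is_matrix X M'" using Mmat uout by (auto simp: is_matrix_def M'_def)
    have inn: "matact X M' f \<in> LS X (insert i I) \<phi>" for f
    proof -
      obtain e where e: "matact X M f = (\<lambda>x. if x \<in> X then \<Sum>j\<in>I. e j * \<phi> j x else 0)"
        using Min[of f] by (auto simp: LS_def)
      define k where "k = ip X u f / ip X u u"
      have "matact X M' f = (\<lambda>x. if x \<in> X then \<Sum>j\<in>insert i I. ((\<lambda>j. e j - k * d j)(i := k)) j * \<phi> j x else 0)"
      proof
        fix x
        have s1: "(\<Sum>j\<in>I. ((\<lambda>j. e j - k * d j)(i := k)) j * \<phi> j x) = (\<Sum>j\<in>I. (e j - k * d j) * \<phi> j x)"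
          using insert by (intro sum.cong) auto
        show "matact X M' f x = (if x \<in> X then \<Sum>j\<in>insert i I. ((\<lambda>j. e j - k * d j)(i := k)) j * \<phi> j x else 0)"
        proof (cases "x \<in> X")
          case True
          have "matact X M' f x = (\<Sum>j\<in>I. e j * \<phi> j x) + k * (\<phi> i x - (\<Sum>j\<in>I. d j * \<phi> j x))"
            using True unfolding act k_def[symmetric] by (simp add: e u_def d) (simp add: v_def)
          also have "\<dots> = k * \<phi> i x + (\<Sum>j\<in>I. (e j - k * d j) * \<phi> j x)"
            by (simp add: algebra_simps sum_subtractf sum_distrib_left)
          finally show ?thesis using True insert(1,2) s1 by simp
        qed (simp add: matact_def)
      qed
      thus ?thesis unfolding LS_def by blast
    qed
    have ort: "ip X (\<lambda>x. f x - matact X M' f x) g = 0" if g: "g \<in> LS X (insert i I) \<phi>" for f g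
    proof -
      define k where "k = ip X u f / ip X u u"
      define F where "F = (\<lambda>x. f x - matact X M' f x)"
      have F: "F = (\<lambda>x. (f x - matact X M f x) - k * u x)" unfolding F_def act k_def by (simp add: algebra_simps)
      have FI: "ip X F g0 = 0" if "g0 \<in> LS X I \<phi>" for g0
      proof -
        have "ip X F g0 = ip X (\<lambda>x. f x - matact X M f x) g0 - k * ip X u g0"
          by (simp add: F ip_diff_left ip_scale_left)
        thus ?thesis using Mort[OF that] uI[OF that] by simp
      qed
      have Fu: "ip X F u = 0"
      proof -
        have "ip X F u = ip X f u - ip X (matact X M f) u - k * ip X u u"
          by (simp add: F ip_diff_left ip_scale_left)
        also have "ip X (matact X M f) u = 0" using uI[OF Min[of f]] by (simp add: ip_sym)
        also have "k * ip X u u = ip X f u" using False by (simp add: k_def ip_sym)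
        finally show ?thesis by simp
      qed
      have Fv: "ip X F v = 0"
      proof -
        have "ip X F v = ip X F (\<lambda>x. u x + matact X M v x)"
          by (rule ip_cong) (auto simp: u_def)
        also have "\<dots> = 0" using Fu FI[OF Min[of v]] by (simp add: ip_add_right)
        finally show ?thesis .
      qed
      obtain c0 g0 where g0: "g0 \<in> LS X I \<phi>" "\<forall>x\<in>X. g x = c0 * v x + g0 x" using decomp[OF g] by blast
      have "ip X F g = ip X F (\<lambda>x. c0 * v x + g0 x)" by (rule ip_cong) (use g0 in auto)
      also have "\<dots> = c0 * ip X F v + ip X F g0" by (simp add: ip_add_right ip_scale_right)
      also have "\<dots> = 0" using Fv FI[OF g0(1)] by simp
      finally show ?thesis by (simp add: F_def)
    qed
    show ?thesis using mat inn ort by (auto simp: projprop_def)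
  qed
qed

lemma projprop_fix:
  assumes "finite X" "projprop X H M" "h \<in> H"
    "\<And>f g. f \<in> H \<Longrightarrow> g \<in> H \<Longrightarrow> (\<lambda>x. f x - g x) \<in> H"
    "\<And>f x. f \<in> H \<Longrightarrow> x \<notin> X \<Longrightarrow> f x = 0"
  shows "matact X M h = h"
proof -
  define g where "g = (\<lambda>x. h x - matact X M h x)"
  have gH: "g \<in> H" unfolding g_def using assms(2,3,4) by (auto simp: projprop_def)
  have "ip X g g = 0" using assms(2) gH by (auto simp: projprop_def g_def)
  hence "x \<in> X \<Longrightarrow> g x = 0" for x using ip_self_zero[OF assms(1)] by blast
  moreover have "x \<notin> X \<Longrightarrow> g x = 0" for x using assms(5)[OF gH] by blast
  ultimately have "\<forall>x. h x = matact X M h x" unfolding g_def by auto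
  thus ?thesis by (simp add: fun_eq_iff)
qed


lemma prod_inner_expand:
  fixes u :: "nat \<Rightarrow> 'a::euclidean_space" and x :: 'a
  shows "(\<Prod>l<j. u l \<bullet> x) = (\<Sum>f\<in>PiE {..<j} (\<lambda>_. Basis). \<Prod>l<j. (u l \<bullet> f l) * (x \<bullet> f l))"
proof -
  have "(\<Prod>l<j. u l \<bullet> x) = (\<Prod>l<j. \<Sum>b\<in>Basis. (u l \<bullet> b) * (x \<bullet> b))"
    by (subst euclidean_inner) (simp add: inner_commute)
  also have "\<dots> = (\<Sum>f\<in>PiE {..<j} (\<lambda>_. Basis). \<Prod>l<j. (u l \<bullet> f l) * (x \<bullet> f l))"
    by (rule prod_sum_PiE) auto
  finally show ?thesis .
qed

lemma moment_zero:
  fixes g :: "'a::euclidean_space \<Rightarrow> real"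
  assumes fin: "finite X" and h: "\<And>c. c \<in> X \<Longrightarrow> (\<Sum>x\<in>X. g x * (c \<bullet> x)^j) = 0"
  shows "(\<Sum>x\<in>X. g x * (\<Prod>l<j. u l \<bullet> x)) = 0"
proof -
  define Fs where "Fs = PiE {..<j} (\<lambda>_. (Basis::'a set))"
  have fFs: "finite Fs" unfolding Fs_def by (rule finite_PiE) auto
  define T where "T = (\<lambda>f. \<Sum>x\<in>X. g x * (\<Prod>l<j. x \<bullet> f l))"
  have pw: "(c \<bullet> x)^j = (\<Sum>f\<in>Fs. \<Prod>l<j. (c \<bullet> f l) * (x \<bullet> f l))" for c x :: 'a
    using prod_inner_expand[where u="\<lambda>_. c" and j=j and x=x] by (simp add: Fs_def)
  have "(\<Sum>f\<in>Fs. T f * T f) = (\<Sum>f\<in>Fs. \<Sum>x\<in>X. \<Sum>y\<in>X. g x * g y * (\<Prod>l<j. (x \<bullet> f l) * (y \<bullet> f l)))"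
    by (simp add: T_def sum_product prod.distrib algebra_simps)
  also have "\<dots> = (\<Sum>x\<in>X. \<Sum>y\<in>X. \<Sum>f\<in>Fs. g x * g y * (\<Prod>l<j. (x \<bullet> f l) * (y \<bullet> f l)))"
    by (subst sum.swap) (simp add: sum.swap[of _ Fs])
  also have "\<dots> = (\<Sum>x\<in>X. \<Sum>y\<in>X. g x * (g y * (x \<bullet> y)^j))"
    by (simp add: pw sum_distrib_left mult.assoc)
  also have "\<dots> = (\<Sum>x\<in>X. g x * (\<Sum>y\<in>X. g y * (x \<bullet> y)^j))"
    by (simp add: sum_distrib_left)
  also have "\<dots> = 0" using h by simp
  finally have ss: "(\<Sum>f\<in>Fs. T f * T f) = 0" .
  have T0: "f \<in> Fs \<Longrightarrow> T f = 0" for f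
    using sum_nonneg_eq_0_iff[OF fFs, of "\<lambda>f. T f * T f"] ss by auto
  have "(\<Sum>x\<in>X. g x * (\<Prod>l<j. u l \<bullet> x)) = (\<Sum>x\<in>X. \<Sum>f\<in>Fs. g x * ((\<Prod>l<j. u l \<bullet> f l) * (\<Prod>l<j. x \<bullet> f l)))"
    by (simp add: prod_inner_expand Fs_def sum_distrib_left prod.distrib)
  also have "\<dots> = (\<Sum>f\<in>Fs. (\<Prod>l<j. u l \<bullet> f l) * T f)"
    by (subst sum.swap) (simp add: T_def sum_distrib_left algebra_simps)
  also have "\<dots> = 0" using T0 by simp
  finally show ?thesis .
qed

lemma LS_W:
  fixes X :: "'a::euclidean_space set"
  assumes fin: "finite X"
  shows "(\<lambda>x. if x \<in> X then (\<Prod>l<j. u l \<bullet> x) else 0) \<in> LS X X (\<lambda>c x. (c \<bullet> x)^j)"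
proof -
  define W where "W = LS X X (\<lambda>c x. (c \<bullet> x)^j)"
  obtain M where M: "projprop X W M" using gram_schmidt[OF fin fin] unfolding W_def by blast
  define h where "h = (\<lambda>x. if x \<in> X then (\<Prod>l<j. u l \<bullet> x) else 0)"
  define g where "g = (\<lambda>x. h x - matact X M h x)"
  have Mh: "matact X M h \<in> W" using M by (simp add: projprop_def)
  have gW: "ip X g w = 0" if "w \<in> W" for w using M that by (simp add: projprop_def g_def)
  have "(\<Sum>x\<in>X. g x * (c \<bullet> x)^j) = 0" if "c \<in> X" for c
  proof -
    have "(\<lambda>x. if x \<in> X then (c \<bullet> x)^j else 0) \<in> W" unfolding W_def using LS_gen[OF fin that] .
    from gW[OF this] show ?thesis by (simp add: ip_def if_distrib cong: if_cong) 
  qed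
  hence "(\<Sum>x\<in>X. g x * (\<Prod>l<j. u l \<bullet> x)) = 0" by (rule moment_zero[OF fin])
  hence gh: "ip X g h = 0" by (simp add: ip_def h_def)
  have "ip X g g = ip X g h - ip X g (matact X M h)" by (simp add: g_def ip_diff_right)
  also have "\<dots> = 0" using gh gW[OF Mh] by simp
  finally have "x \<in> X \<Longrightarrow> g x = 0" for x using ip_self_zero[OF fin] by blast
  hence "h = matact X M h"
    by (auto simp: fun_eq_iff g_def h_def matact_def)
  thus ?thesis using Mh by (simp add: W_def h_def)
qed


lemma poly_k_sum: "degree p \<le> k \<Longrightarrow> poly p t = (\<Sum>j\<le>k. coeff p j * t^j)" for p :: "real poly"
proof -
  assume "degree p \<le> k"
  hence "poly p t = poly (\<Sum>i\<le>k. monom (coeff p i) i) t" by (simp add: poly_as_sum_of_monoms')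
  also have "\<dots> = (\<Sum>i\<le>k. poly (monom (coeff p i) i) t)" by (rule poly_sum)
  also have "\<dots> = (\<Sum>j\<le>k. coeff p j * t^j)" by (rule sum.cong[OF refl]) (simp add: poly_monom)
  finally show ?thesis .
qed

lemma Pol_LS:
  fixes X :: "'a::euclidean_space set"
  assumes fin: "finite X"
  shows "Pol X k = LS X (X \<times> {..k}) (\<lambda>(a,j) x. (a \<bullet> x)^j)"
proof
  show "Pol X k \<subseteq> LS X (X \<times> {..k}) (\<lambda>(a,j) x. (a \<bullet> x)^j)"
  proof
    fix f assume "f \<in> Pol X k"
    then obtain P where P: "\<forall>a\<in>X. degree (P a) \<le> k"
      "f = (\<lambda>x. if x \<in> X then (\<Sum>a\<in>X. poly (P a) (a \<bullet> x)) else 0)" by (auto simp: Pol_def)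
    have eqs: "(\<Sum>a\<in>X. poly (P a) (a \<bullet> x)) = (\<Sum>i\<in>X \<times> {..k}. (\<lambda>(a,j). coeff (P a) j) i * (\<lambda>(a,j) x. (a \<bullet> x)^j) i x)" for x
    proof -
      have "(\<Sum>a\<in>X. poly (P a) (a \<bullet> x)) = (\<Sum>a\<in>X. \<Sum>j\<le>k. coeff (P a) j * (a \<bullet> x)^j)"
        using P(1) by (intro sum.cong refl poly_k_sum) auto
      also have "\<dots> = (\<Sum>(a,j)\<in>X \<times> {..k}. coeff (P a) j * (a \<bullet> x)^j)"
        by (rule sum.cartesian_product)
      finally show ?thesis by (simp add: case_prod_unfold)
    qed
    have "f = (\<lambda>x. if x \<in> X then (\<Sum>i\<in>X \<times> {..k}. (\<lambda>(a,j). coeff (P a) j) i * (\<lambda>(a,j) x. (a \<bullet> x)^j) i x) else 0)"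
      unfolding P(2) by (rule ext) (simp only: eqs)
    thus "f \<in> LS X (X \<times> {..k}) (\<lambda>(a,j) x. (a \<bullet> x)^j)"
      unfolding LS_def mem_Collect_eq by (rule exI[where x="\<lambda>(a,j). coeff (P a) j"])
  qed
next
  show "LS X (X \<times> {..k}) (\<lambda>(a,j) x. (a \<bullet> x)^j) \<subseteq> Pol X k"
  proof
    fix f assume "f \<in> LS X (X \<times> {..k}) (\<lambda>(a,j) x. (a \<bullet> x)^j)"
    then obtain c where c: "f = (\<lambda>x. if x \<in> X then \<Sum>i\<in>X \<times> {..k}. c i * (\<lambda>(a,j) x. (a \<bullet> x)^j) i x else 0)"
      by (auto simp: LS_def)
    define P where "P = (\<lambda>a. \<Sum>j\<le>k. monom (c (a,j)) j)"
    have dP: "degree (P a) \<le> k" for a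
      unfolding P_def by (rule degree_sum_le) (auto intro: order_trans[OF degree_monom_le])
    have "(\<Sum>i\<in>X \<times> {..k}. c i * (\<lambda>(a,j) x. (a \<bullet> x)^j) i x) = (\<Sum>a\<in>X. poly (P a) (a \<bullet> x))" for x
    proof -
      have "(\<Sum>i\<in>X \<times> {..k}. c i * (\<lambda>(a,j) x. (a \<bullet> x)^j) i x) = (\<Sum>(a,j)\<in>X \<times> {..k}. c (a,j) * (a \<bullet> x)^j)"
        by (simp add: case_prod_unfold)
      also have "\<dots> = (\<Sum>a\<in>X. \<Sum>j\<le>k. c (a,j) * (a \<bullet> x)^j)"
        by (rule sum.cartesian_product[symmetric])
      also have "\<dots> = (\<Sum>a\<in>X. poly (P a) (a \<bullet> x))"
        by (simp add: P_def poly_sum poly_monom)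
      finally show ?thesis .
    qed
    hence "f = (\<lambda>x. if x \<in> X then (\<Sum>a\<in>X. poly (P a) (a \<bullet> x)) else 0)"
      unfolding c by (intro ext) (simp only:)
    thus "f \<in> Pol X k" unfolding Pol_def using dP by (intro CollectI exI[of _ P]) auto
  qed
qed

lemma Pol_I: "(\<And>a. a \<in> X \<Longrightarrow> degree (P a) \<le> k) \<Longrightarrow>
   (\<lambda>x. if x \<in> X then (\<Sum>a\<in>X. poly (P a) (a \<bullet> x)) else 0) \<in> Pol X k"
  unfolding Pol_def by blast

lemma Pol_out: "f \<in> Pol X k \<Longrightarrow> x \<notin> X \<Longrightarrow> f x = 0" by (auto simp: Pol_def)

lemma Pol_lin: "finite X \<Longrightarrow> f \<in> Pol X k \<Longrightarrow> g \<in> Pol X k \<Longrightarrow> (\<lambda>x. a * f x + b * g x) \<in> Pol X k"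
  by (simp add: Pol_LS LS_lin)

lemma Pol_diff: "finite X \<Longrightarrow> f \<in> Pol X k \<Longrightarrow> g \<in> Pol X k \<Longrightarrow> (\<lambda>x. f x - g x) \<in> Pol X k"
  by (simp add: Pol_LS LS_diff)

lemma Pol_add: "finite X \<Longrightarrow> f \<in> Pol X k \<Longrightarrow> g \<in> Pol X k \<Longrightarrow> (\<lambda>x. f x + g x) \<in> Pol X k"
  by (simp add: Pol_LS LS_add)

lemma Pol_scale: "finite X \<Longrightarrow> f \<in> Pol X k \<Longrightarrow> (\<lambda>x. a * f x) \<in> Pol X k"
  by (simp add: Pol_LS LS_scale)

lemma Pol_0: "finite X \<Longrightarrow> (\<lambda>x. 0) \<in> Pol X k"
  by (simp add: Pol_LS LS_0)

lemma Pol_sum: "finite X \<Longrightarrow> finite J \<Longrightarrow> (\<And>j. j \<in> J \<Longrightarrow> f j \<in> Pol X k) \<Longrightarrow> (\<lambda>x. \<Sum>j\<in>J. f j x) \<in> Pol X k"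
  by (simp add: Pol_LS LS_sum)

lemma Pol_mono: "finite X \<Longrightarrow> k \<le> k' \<Longrightarrow> Pol X k \<subseteq> Pol X k'"
  by (simp add: Pol_LS) (rule LS_mono, auto)

lemma Pol_cong: "f \<in> Pol X k \<Longrightarrow> (\<And>x. x \<in> X \<Longrightarrow> g x = f x) \<Longrightarrow> (\<And>x. x \<notin> X \<Longrightarrow> g x = 0) \<Longrightarrow> g \<in> Pol X k"
proof -
  assume "f \<in> Pol X k" "\<And>x. x \<in> X \<Longrightarrow> g x = f x" "\<And>x. x \<notin> X \<Longrightarrow> g x = 0"
  moreover hence "g = f" using Pol_out by (metis ext)
  ultimately show ?thesis by simp
qed

lemma Pol_pow:
  fixes X :: "'a::euclidean_space set"
  assumes fin: "finite X"
  shows "(\<lambda>x. if x \<in> X then (y \<bullet> x) * (b \<bullet> x)^j else 0) \<in> Pol X (Suc j)"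
proof -
  define u where "u = (\<lambda>l::nat. if l = 0 then y else b)"
  have e: "(\<Prod>l<Suc j. u l \<bullet> x) = (y \<bullet> x) * (b \<bullet> x)^j" for x
    by (simp only: prod.lessThan_Suc_shift) (simp add: u_def)
  have "(\<lambda>x. if x \<in> X then (y \<bullet> x) * (b \<bullet> x)^j else 0) \<in> LS X X (\<lambda>c x. (c \<bullet> x)^(Suc j))"
    using LS_W[OF fin, where j="Suc j" and u=u] unfolding e .
  then obtain d where d: "(\<lambda>x. if x \<in> X then (y \<bullet> x) * (b \<bullet> x)^j else 0)
      = (\<lambda>x. if x \<in> X then \<Sum>c\<in>X. d c * (c \<bullet> x)^(Suc j) else 0)" unfolding LS_def mem_Collect_eq by (elim exE) (rule that)
  have "(\<lambda>x. if x \<in> X then \<Sum>c\<in>X. poly (monom (d c) (Suc j)) (c \<bullet> x) else 0) \<in> Pol X (Suc j)"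
    by (rule Pol_I) (rule degree_monom_le)
  thus ?thesis unfolding d by (simp only: poly_monom)
qed

lemma Pol_mult_lin:
  fixes X :: "'a::euclidean_space set"
  assumes fin: "finite X" and f: "f \<in> Pol X k"
  shows "(\<lambda>x. (y \<bullet> x) * f x) \<in> Pol X (Suc k)"
proof -
  obtain P where P: "\<forall>a\<in>X. degree (P a) \<le> k"
      "f = (\<lambda>x. if x \<in> X then (\<Sum>a\<in>X. poly (P a) (a \<bullet> x)) else 0)" using f by (auto simp: Pol_def)
  have t: "(\<lambda>x. if x \<in> X then (y \<bullet> x) * poly (P a) (a \<bullet> x) else 0) \<in> Pol X (Suc k)" if a: "a \<in> X" for a
  proof -
    have "(\<lambda>x. \<Sum>j\<le>k. coeff (P a) j * (if x \<in> X then (y \<bullet> x) * (a \<bullet> x)^j else 0)) \<in> Pol X (Suc k)"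
    proof -
      have H: "(\<lambda>x. if x \<in> X then (y \<bullet> x) * (a \<bullet> x)^j else 0) \<in> Pol X (Suc k)" if "j \<le> k" for j
        using Pol_pow[OF fin, of y a j] Pol_mono[OF fin, of "Suc j" "Suc k"] that by auto
      show ?thesis by (rule Pol_sum[OF fin finite_atMost], rule Pol_scale[OF fin], rule H, simp)
    qed
    moreover have "(\<Sum>j\<le>k. coeff (P a) j * (if x \<in> X then (y \<bullet> x) * (a \<bullet> x)^j else 0))
        = (if x \<in> X then (y \<bullet> x) * poly (P a) (a \<bullet> x) else 0)" for x
      using poly_k_sum[of "P a" k "a \<bullet> x"] P(1) a by (auto simp: sum_distrib_left algebra_simps)
    ultimately show ?thesis by simp
  qed
  have "(\<lambda>x. \<Sum>a\<in>X. (if x \<in> X then (y \<bullet> x) * poly (P a) (a \<bullet> x) else 0)) \<in> Pol X (Suc k)"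
    by (rule Pol_sum[OF fin fin], rule t)
  moreover have "(\<Sum>a\<in>X. (if x \<in> X then (y \<bullet> x) * poly (P a) (a \<bullet> x) else 0)) = (y \<bullet> x) * f x" for x
    by (auto simp: P(2) sum_distrib_left)
  ultimately show ?thesis by simp
qed

definition FP :: "'a::euclidean_space set \<Rightarrow> nat \<Rightarrow> ('a \<Rightarrow> 'a \<Rightarrow> real) \<Rightarrow> bool" where
  "FP X i M \<longleftrightarrow> is_matrix X M \<and>
     (\<forall>f\<in>CX X. matact X M f \<in> Harm X i \<and>
        (\<forall>g\<in>Harm X i. ipX X (\<lambda>x. f x - matact X M f x) g = 0))"

lemma ipX_ip: "ipX X f g = ip X f g / real (card X)" by (simp add: ipX_def ip_def)

lemma Harm_out: "f \<in> Harm X i \<Longrightarrow> x \<notin> X \<Longrightarrow> f x = 0"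
  by (auto simp: Harm_def Pol_def split: if_splits)

lemma Harm_diff:
  assumes "finite X" "f \<in> Harm X i" "g \<in> Harm X i" shows "(\<lambda>x. f x - g x) \<in> Harm X i"
proof (cases "i = 0")
  case True thus ?thesis using assms by (simp add: Harm_def Pol_diff)
next
  case False thus ?thesis using assms
    by (auto simp: Harm_def Pol_diff ipX_ip ip_diff_left)
qed

lemma FP_unique:
  assumes fin: "finite X" and ne: "X \<noteq> {}" and M: "FP X i M" and M': "FP X i M'"
  shows "M = M'"
proof (rule ext, rule ext)
  fix x y
  show "M x y = M' x y"
  proof (cases "x \<in> X \<and> y \<in> X")
    case False thus ?thesis using M M' by (auto simp: FP_def is_matrix_def)
  next
    case True
    define f where "f = (\<lambda>z. if z = y then 1 else (0::real))"
    have fC: "f \<in> CX X" using True by (auto simp: CX_def f_def)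
    define A where "A = matact X M f"
    define A' where "A' = matact X M' f"
    have AH: "A \<in> Harm X i" "A' \<in> Harm X i" using M M' fC by (auto simp: FP_def A_def A'_def)
    define D where "D = (\<lambda>x. A x - A' x)"
    have DH: "D \<in> Harm X i" unfolding D_def by (rule Harm_diff[OF fin AH])
    have o1: "ipX X (\<lambda>x. f x - A x) D = 0" and o2: "ipX X (\<lambda>x. f x - A' x) D = 0"
      using M M' fC DH by (auto simp: FP_def A_def A'_def)
    have "ip X D D = ip X (\<lambda>x. f x - A' x) D - ip X (\<lambda>x. f x - A x) D"
      by (simp add: D_def ip_diff_left)
    also have "\<dots> = 0" using o1 o2 ne fin by (simp add: ipX_ip)
    finally have "D x = 0" using ip_self_zero[OF fin] True by blast
    moreover have "A x = M x y" "A' x = M' x y" using True fin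
      by (simp_all add: A_def A'_def matact_def f_def if_distrib sum.delta cong: if_cong)
    ultimately show ?thesis by (simp add: D_def)
  qed
qed

lemma Fproj_eq: "finite X \<Longrightarrow> X \<noteq> {} \<Longrightarrow> FP X i M \<Longrightarrow> Fproj X i = M"
  unfolding Fproj_def FP_def[symmetric] using FP_unique by blast

lemma projprop_FP:
  assumes "projprop X (Harm X i) M" shows "FP X i M"
  using assms by (auto simp: projprop_def FP_def ipX_ip)

lemma Harm_exists:
  fixes X :: "'a::euclidean_space set"
  assumes fin: "finite X"
  shows "\<exists>M. projprop X (Harm X i) M"
proof -
  have PP: "\<exists>M. projprop X (Pol X k) M" for k
    unfolding Pol_LS[OF fin] by (rule gram_schmidt[OF fin]) (use fin in auto)
  show ?thesis
  proof (cases "i = 0")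
    case True thus ?thesis using PP[of 0] by (simp add: Harm_def)
  next
    case False
    obtain P1 where P1: "projprop X (Pol X i) P1" using PP by blast
    obtain P0 where P0: "projprop X (Pol X (i - 1)) P0" using PP by blast
    have sub: "Pol X (i - 1) \<subseteq> Pol X i" by (rule Pol_mono[OF fin]) simp
    define M where "M = (\<lambda>x y. P1 x y - P0 x y)"
    have act: "matact X M f = (\<lambda>x. matact X P1 f x - matact X P0 f x)" for f
      by (auto simp: M_def matact_def algebra_simps sum_subtractf)
    have in1: "matact X P1 f \<in> Pol X i" and in0: "matact X P0 f \<in> Pol X (i - 1)" for f
      using P1 P0 by (auto simp: projprop_def)
    have o1: "ip X (\<lambda>x. f x - matact X P1 f x) g = 0" if "g \<in> Pol X i" for f g
      using P1 that by (auto simp: projprop_def)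
    have o0: "ip X (\<lambda>x. f x - matact X P0 f x) g = 0" if "g \<in> Pol X (i - 1)" for f g
      using P0 that by (auto simp: projprop_def)
    have "matact X M f \<in> Harm X i" for f
    proof -
      have "matact X M f \<in> Pol X i" unfolding act using in1 in0 sub by (auto intro: Pol_diff[OF fin])
      moreover have "ipX X (matact X M f) g = 0" if g: "g \<in> Pol X (i - 1)" for g
      proof -
        have "ip X (matact X M f) g = ip X (\<lambda>x. f x - matact X P0 f x) g - ip X (\<lambda>x. f x - matact X P1 f x) g"
          unfolding act by (simp add: ip_diff_left)
        thus ?thesis using o1 o0 g sub by (auto simp: ipX_ip)
      qed
      ultimately show ?thesis using False by (simp add: Harm_def)
    qed
    moreover have "ip X (\<lambda>x. f x - matact X M f x) g = 0" if g: "g \<in> Harm X i" for f g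
    proof -
      have gP: "g \<in> Pol X i" and go: "\<forall>h\<in>Pol X (i - 1). ipX X g h = 0"
        using g False by (auto simp: Harm_def)
      have "ip X (\<lambda>x. f x - matact X M f x) g = ip X (\<lambda>x. f x - matact X P1 f x) g + ip X (matact X P0 f) g"
        unfolding act by (simp add: ip_def sum_subtractf[symmetric] sum.distrib[symmetric] algebra_simps)
      also have "ip X (matact X P0 f) g = 0"
      proof -
        have "ipX X g (matact X P0 f) = 0" using go in0 by blast
        hence "ip X g (matact X P0 f) = 0 \<or> card X = 0" by (simp add: ipX_ip)
        thus ?thesis using fin by (auto simp: ip_sym ip_def)
      qed
      finally show ?thesis using o1[OF gP] by simp
    qed
    moreover have "is_matrix X M" using P1 P0 by (auto simp: projprop_def is_matrix_def M_def)
    ultimately show ?thesis unfolding projprop_def by blast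
  qed
qed

lemma Fproj_prop:
  fixes X :: "'a::euclidean_space set"
  assumes "finite X" "X \<noteq> {}"
  shows "projprop X (Harm X i) (Fproj X i)"
proof -
  obtain M where M: "projprop X (Harm X i) M" using Harm_exists[OF assms(1)] by blast
  hence "Fproj X i = M" using Fproj_eq[OF assms] projprop_FP by blast
  thus ?thesis using M by simp
qed


context setting
begin

lemma s_pos: "s \<ge> 1"
proof -
  obtain x where x: "x \<in> X" using nonempty by blast
  have "\<exists>y\<in>X. y \<noteq> x"
  proof (rule ccontr)
    assume "\<not> ?thesis" hence "X = {x}" using x by blast
    hence "(\<Sum>y\<in>X. x \<bullet> y) = real DIM('a)" using inner_self_m[OF x] by simp
    moreover have "(\<Sum>y\<in>X. x \<bullet> y) = 0" using des x by (simp add: design2_def)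
    ultimately show False using dimpos by simp
  qed
  then obtain y where y: "y \<in> X" "y \<noteq> x" by blast
  have "x \<bullet> y \<in> Aset X" unfolding Aset_def using x y by blast
  hence "card (Aset X) \<noteq> 0" using finite_Aset by (metis card_0_eq empty_iff)
  thus ?thesis using sd by (simp add: s_distance_def)
qed

definition col :: "nat \<Rightarrow> 'a \<Rightarrow> 'a \<Rightarrow> real" where
  "col k y = (\<lambda>x. if x \<in> X then poly (q k) (y \<bullet> x) else 0)"

lemma col_Pol: "k \<le> s \<Longrightarrow> y \<in> X \<Longrightarrow> col k y \<in> Pol X k"
proof -
  assume k: "k \<le> s" and y: "y \<in> X"
  have e: "(\<Sum>a\<in>X. poly (if a = y then q k else 0) (a \<bullet> x)) = poly (q k) (y \<bullet> x)" for x
  proof -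
    have "(\<Sum>a\<in>X. poly (if a = y then q k else 0) (a \<bullet> x)) = (\<Sum>a\<in>X. if a = y then poly (q k) (a \<bullet> x) else 0)"
      by (rule sum.cong) auto
    also have "\<dots> = poly (q k) (y \<bullet> x)" using fin y by simp
    finally show ?thesis .
  qed
  have "(\<lambda>x. if x \<in> X then (\<Sum>a\<in>X. poly (if a = y then q k else 0) (a \<bullet> x)) else 0) \<in> Pol X k"
    by (rule Pol_I) (use q_deg k in auto)
  thus ?thesis by (simp only: e col_def)
qed

lemma col_out: "x \<notin> X \<Longrightarrow> col k y x = 0" by (simp add: col_def)

lemma Pol_expand:
  assumes "k \<le> s" "f \<in> Pol X k"
  shows "\<exists>c. \<forall>x\<in>X. f x = (\<Sum>j\<le>k. \<Sum>a\<in>X. c j a * col j a x)"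
proof -
  obtain P where P: "\<forall>a\<in>X. degree (P a) \<le> k"
      "f = (\<lambda>x. if x \<in> X then (\<Sum>a\<in>X. poly (P a) (a \<bullet> x)) else 0)"
    using assms(2) by (auto simp: Pol_def)
  have "\<forall>a\<in>X. \<exists>d. P a = (\<Sum>j\<le>k. smult (d j) (q j))" using expand_q assms(1) P(1) by blast
  hence "\<exists>D. \<forall>a\<in>X. P a = (\<Sum>j\<le>k. smult (D a j) (q j))" by (rule bchoice)
  then obtain D where D: "\<forall>a\<in>X. P a = (\<Sum>j\<le>k. smult (D a j) (q j))" by blast
  show ?thesis
  proof (intro exI[of _ "\<lambda>j a. D a j"] ballI)
    fix x assume x: "x \<in> X"
    have "f x = (\<Sum>a\<in>X. poly (P a) (a \<bullet> x))" using x by (simp add: P(2))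
    also have "\<dots> = (\<Sum>a\<in>X. \<Sum>j\<le>k. D a j * poly (q j) (a \<bullet> x))"
      using D by (intro sum.cong refl) (simp add: poly_sum)
    also have "\<dots> = (\<Sum>j\<le>k. \<Sum>a\<in>X. D a j * col j a x)"
      by (subst sum.swap) (simp add: col_def x)
    finally show "f x = (\<Sum>j\<le>k. \<Sum>a\<in>X. D a j * col j a x)" .
  qed
qed

lemma CX_Pol: "f \<in> CX X \<Longrightarrow> f \<in> Pol X s"
proof -
  assume f: "f \<in> CX X"
  obtain L where L: "degree L \<le> s" "\<forall>\<alpha>\<in>Aset' X. poly L \<alpha> = (if \<alpha> = real DIM('a) then 1 else 0)"
    using interp_A'[of "\<lambda>\<alpha>. if \<alpha> = real DIM('a) then 1 else 0"] by blast
  have e: "(\<Sum>a\<in>X. poly (smult (f a) L) (a \<bullet> x)) = f x" if x: "x \<in> X" for x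
  proof -
    have "(\<Sum>a\<in>X. poly (smult (f a) L) (a \<bullet> x)) = (\<Sum>a\<in>X. if a = x then f a else 0)"
    proof (rule sum.cong[OF refl])
      fix a assume a: "a \<in> X"
      show "poly (smult (f a) L) (a \<bullet> x) = (if a = x then f a else 0)"
        using L(2) inner_in_A'[OF a x] eq_m_iff[OF a x] by auto
    qed
    also have "\<dots> = f x" using fin x by simp
    finally show ?thesis .
  qed
  have "(\<lambda>x. if x \<in> X then (\<Sum>a\<in>X. poly (smult (f a) L) (a \<bullet> x)) else 0) \<in> Pol X s"
    by (rule Pol_I) (rule order_trans[OF degree_smult_le L(1)])
  moreover have "(\<lambda>x. if x \<in> X then (\<Sum>a\<in>X. poly (smult (f a) L) (a \<bullet> x)) else 0) = f"
    using e f by (auto simp: CX_def fun_eq_iff)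
  ultimately show ?thesis by simp
qed

lemma pp_comm3: "pp (pCons 0 p) r = pp (pCons 0 r) p"
  by (simp add: pp_def algebra_simps)

lemma rec_q:
  assumes k: "Suc k \<le> s"
  shows "\<exists>c. c k \<noteq> 0 \<and> (\<forall>\<alpha>\<in>Aset' X. \<alpha> * poly (q (Suc k)) \<alpha> = (\<Sum>j\<in>{k..s}. c j * poly (q j) \<alpha>))"
proof -
  obtain w where w: "degree w \<le> s" "\<forall>\<alpha>\<in>Aset' X. poly w \<alpha> = \<alpha> * poly (q (Suc k)) \<alpha>"
    using interp_A'[of "\<lambda>\<alpha>. \<alpha> * poly (q (Suc k)) \<alpha>"] by blast
  obtain c where c: "w = (\<Sum>j\<le>s. smult (c j) (q j))" using expand_q[OF le_refl w(1)] by blast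
  define N where "N = (real (card X))^2"
  have Npos: "N > 0" using npos by (simp add: N_def)
  have cw: "c j * N * poly (q j) (real DIM('a)) = pp (pCons 0 (q (Suc k))) (q j)" if "j \<le> s" for j
  proof -
    have "pp w (q j) = c j * N * poly (q j) (real DIM('a))" using pp_expand[of j s c] that by (simp add: c N_def)
    moreover have "pp w (q j) = pp (pCons 0 (q (Suc k))) (q j)"
      unfolding pp_def using w(2) inner_in_A' by (intro sum.cong refl) simp
    ultimately show ?thesis by simp
  qed
  have c0: "c j = 0" if j: "j < k" for j
  proof -
    have "pp (pCons 0 (q (Suc k))) (q j) = pp (pCons 0 (q j)) (q (Suc k))" by (rule pp_comm3)
    also have "\<dots> = 0"
    proof (rule pp_q_low)
      show "Suc k \<le> s" by fact
      have "degree (pCons 0 (q j)) \<le> Suc (degree (q j))" by (simp add: degree_pCons_le)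
      thus "degree (pCons 0 (q j)) < Suc k" using q_deg[of j] j k by simp
    qed
    finally have "c j * N * poly (q j) (real DIM('a)) = 0" using cw j k by simp
    thus ?thesis using Npos qm_pos[of j] j k by simp
  qed
  have ck: "c k \<noteq> 0"
  proof
    assume ck0: "c k = 0"
    have "pp (pCons 0 (q k)) (q (Suc k)) = 0" using cw[of k] ck0 k pp_comm3 by simp
    moreover obtain e where e: "pCons 0 (q k) = (\<Sum>i\<le>Suc k. smult (e i) (q i))"
    proof -
      have "degree (pCons 0 (q k)) \<le> Suc k" using degree_pCons_le[of 0 "q k"] q_deg[of k] k by simp
      thus ?thesis using expand_q[OF k] that by blast
    qed
    moreover have "e (Suc k) \<noteq> 0"
    proof
      assume e0: "e (Suc k) = 0"
      have "coeff (pCons 0 (q k)) (Suc k) = lead_coeff (q k)" using q_deg[of k] k by simp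
      also have "\<dots> \<noteq> 0" using q_nz[of k] k by simp
      finally have "coeff (\<Sum>i\<le>Suc k. smult (e i) (q i)) (Suc k) \<noteq> 0" using e by simp
      moreover have "coeff (\<Sum>i\<le>Suc k. smult (e i) (q i)) (Suc k) = 0"
      proof -
        have "coeff (\<Sum>i\<le>Suc k. smult (e i) (q i)) (Suc k) = (\<Sum>i\<le>Suc k. e i * coeff (q i) (Suc k))"
          by (simp add: coeff_sum)
        also have "\<dots> = 0"
        proof (rule sum.neutral, rule ballI)
          fix i assume i: "i \<in> {..Suc k}"
          show "e i * coeff (q i) (Suc k) = 0"
          proof (cases "i = Suc k")
            case True thus ?thesis using e0 by simp
          next
            case False
            hence "degree (q i) < Suc k" using i q_deg[of i] k by auto
            thus ?thesis by (simp add: coeff_eq_0)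
          qed
        qed
        finally show ?thesis .
      qed
      ultimately show False by simp
    qed
    moreover have "pp (\<Sum>i\<le>Suc k. smult (e i) (q i)) (q (Suc k)) = e (Suc k) * N * poly (q (Suc k)) (real DIM('a))"
      using pp_expand[of "Suc k" "Suc k" e] k by (simp add: N_def)
    ultimately show False using Npos qm_pos[OF k] by simp
  qed
  show ?thesis
  proof (intro exI[of _ c] conjI ck ballI)
    fix \<alpha> assume \<alpha>: "\<alpha> \<in> Aset' X"
    have "\<alpha> * poly (q (Suc k)) \<alpha> = poly w \<alpha>" using w(2) \<alpha> by simp
    also have "\<dots> = (\<Sum>j\<le>s. c j * poly (q j) \<alpha>)" by (simp add: c poly_sum)
    also have "\<dots> = (\<Sum>j\<in>{..<k} \<union> {k..s}. c j * poly (q j) \<alpha>)"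
      using k by (intro sum.cong) auto
    also have "\<dots> = (\<Sum>j\<in>{..<k}. c j * poly (q j) \<alpha>) + (\<Sum>j\<in>{k..s}. c j * poly (q j) \<alpha>)"
      by (rule sum.union_disjoint) auto
    also have "(\<Sum>j\<in>{..<k}. c j * poly (q j) \<alpha>) = 0" using c0 by simp
    finally show "\<alpha> * poly (q (Suc k)) \<alpha> = (\<Sum>j\<in>{k..s}. c j * poly (q j) \<alpha>)" by simp
  qed
qed

lemma sum_col: "x \<in> X \<Longrightarrow> z \<in> X \<Longrightarrow> (\<Sum>j\<le>s. col j z x) = (if x = z then real (card X) else 0)"
  using sum_q[of z x] by (auto simp: col_def)

end

locale setting_hyp = setting +
  assumes hyp: "\<forall>x\<in>X. \<forall>y\<in>X. Fproj X s x y = (1 / real (card X)) * poly (q s) (real (card X) * Gram X x y)"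
begin

definition perp :: "nat \<Rightarrow> bool" where
  "perp k \<longleftrightarrow> (\<forall>y\<in>X. \<forall>g\<in>Pol X (k - 1). ip X (col k y) g = 0)"

lemma perp_s: "perp s"
  unfolding perp_def
proof (intro ballI)
  fix y g assume y: "y \<in> X" and g: "g \<in> Pol X (s - 1)"
  define F where "F = Fproj X s"
  have P: "projprop X (Harm X s) F" unfolding F_def by (rule Fproj_prop[OF fin nonempty])
  define \<delta> where "\<delta> = (\<lambda>z. if z = y then 1 else (0::real))"
  have "matact X F \<delta> = (\<lambda>x. (1 / real (card X)) * col s y x)"
  proof
    fix x show "matact X F \<delta> x = (1 / real (card X)) * col s y x"
    proof (cases "x \<in> X")
      case True
      have "matact X F \<delta> x = F x y" using True y fin
        by (simp add: matact_def \<delta>_def if_distrib sum.delta cong: if_cong)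
      also have "\<dots> = (1 / real (card X)) * poly (q s) (x \<bullet> y)"
        using hyp True y npos by (simp add: F_def Gram_def)
      finally show ?thesis using True by (simp add: col_def inner_commute)
    qed (simp add: matact_def col_def)
  qed
  moreover have "matact X F \<delta> \<in> Harm X s" using P by (simp add: projprop_def)
  ultimately have "(\<lambda>x. (1 / real (card X)) * col s y x) \<in> Harm X s" by simp
  hence "ipX X (\<lambda>x. (1 / real (card X)) * col s y x) g = 0" using g s_pos by (auto simp: Harm_def)
  moreover have "ip X (\<lambda>x. (1 / real (card X)) * col s y x) g = (1 / real (card X)) * ip X (col s y) g"
    by (rule ip_scale_left)
  ultimately show "ip X (col s y) g = 0" using npos by (simp add: ipX_ip)
qed

lemma perp_all: "1 \<le> k \<Longrightarrow> k \<le> s \<Longrightarrow> perp k"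
proof (induction "s - k" arbitrary: k rule: less_induct)
  case less
  show ?case
  proof (cases "k = s")
    case True thus ?thesis using perp_s by simp
  next
    case False
    hence ks: "Suc k \<le> s" using less by simp
    have IH: "perp j" if "k < j" "j \<le> s" for j using less that by auto
    obtain c where c: "c k \<noteq> 0" "\<forall>\<alpha>\<in>Aset' X. \<alpha> * poly (q (Suc k)) \<alpha> = (\<Sum>j\<in>{k..s}. c j * poly (q j) \<alpha>)"
      using rec_q[OF ks] by blast
    show ?thesis unfolding perp_def
    proof (intro ballI)
      fix y g assume y: "y \<in> X" and g: "g \<in> Pol X (k - 1)"
      have split: "{k..s} = insert k {Suc k..s}" using ks by auto
      have eq: "c k * col k y x = (y \<bullet> x) * col (Suc k) y x - (\<Sum>j\<in>{Suc k..s}. c j * col j y x)" for x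
      proof (cases "x \<in> X")
        case True
        have "(y \<bullet> x) * col (Suc k) y x = (\<Sum>j\<in>{k..s}. c j * col j y x)"
          using c(2) inner_in_A'[OF y True] True by (simp add: col_def)
        also have "\<dots> = c k * col k y x + (\<Sum>j\<in>{Suc k..s}. c j * col j y x)"
          unfolding split by (subst sum.insert) auto
        finally show ?thesis by simp
      qed (simp add: col_def)
      have yg: "(\<lambda>x. (y \<bullet> x) * g x) \<in> Pol X k"
        using Pol_mult_lin[OF fin g, of y] less(2) by simp
      have t1: "ip X (\<lambda>x. (y \<bullet> x) * col (Suc k) y x) g = 0"
      proof -
        have "ip X (\<lambda>x. (y \<bullet> x) * col (Suc k) y x) g = ip X (col (Suc k) y) (\<lambda>x. (y \<bullet> x) * g x)"
          by (simp add: ip_def algebra_simps)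
        also have "\<dots> = 0" using IH[of "Suc k"] ks y yg by (simp add: perp_def)
        finally show ?thesis .
      qed
      have t2: "ip X (col j y) g = 0" if j: "j \<in> {Suc k..s}" for j
      proof -
        have "k - 1 \<le> j - 1" using j by auto
        hence "g \<in> Pol X (j - 1)" using g Pol_mono[OF fin] by blast
        thus ?thesis using IH[of j] j y by (auto simp: perp_def)
      qed
      have "c k * ip X (col k y) g = ip X (\<lambda>x. c k * col k y x) g" by (simp add: ip_scale_left)
      also have "\<dots> = ip X (\<lambda>x. (y \<bullet> x) * col (Suc k) y x - (\<Sum>j\<in>{Suc k..s}. c j * col j y x)) g"
        by (simp only: eq)
      also have "\<dots> = ip X (\<lambda>x. (y \<bullet> x) * col (Suc k) y x) g - (\<Sum>j\<in>{Suc k..s}. c j * ip X (col j y) g)"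
        by (simp add: ip_diff_left ip_sym[of X _ g] ip_sum_right ip_scale_right)
      also have "\<dots> = 0" using t1 t2 by simp
      finally show "ip X (col k y) g = 0" using c(1) by simp
    qed
  qed
qed

lemma ortho:
  assumes "i \<le> s" "j \<le> s" "y \<in> X" "z \<in> X"
  shows "ip X (col j y) (col i z) = (if i = j then real (card X) * poly (q j) (y \<bullet> z) else 0)"
proof -
  have lt: "ip X (col j y) (col i z) = 0" if "i < j" "i \<le> s" "j \<le> s" "y \<in> X" "z \<in> X" for i j y z
  proof -
    have "i \<le> j - 1" using that by auto
    hence "col i z \<in> Pol X (j - 1)" using col_Pol[of i z] Pol_mono[OF fin] that by blast
    thus ?thesis using perp_all[of j] that by (auto simp: perp_def)
  qed
  show ?thesis
  proof (cases "i = j")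
    case False
    thus ?thesis using lt[of i j y z] lt[of j i z y] assms by (cases "i < j") (auto simp: ip_sym)
  next
    case True
    have e: "col j z x = (if x = z then real (card X) else 0) - (\<Sum>i\<in>{..s} - {j}. col i z x)" if x: "x \<in> X" for x
    proof -
      have "(\<Sum>i\<le>s. col i z x) = col j z x + (\<Sum>i\<in>{..s} - {j}. col i z x)"
        using assms(2) by (subst sum.remove[of _ j]) auto
      thus ?thesis using sum_col[OF x assms(4)] by simp
    qed
    have "ip X (col j y) (col j z) = ip X (col j y) (\<lambda>x. (if x = z then real (card X) else 0) - (\<Sum>i\<in>{..s} - {j}. col i z x))"
      by (rule ip_cong) (auto simp: e)
    also have "\<dots> = ip X (col j y) (\<lambda>x. if x = z then real (card X) else 0) - (\<Sum>i\<in>{..s} - {j}. ip X (col j y) (col i z))"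
      by (simp add: ip_diff_right ip_sum_right)
    also have "(\<Sum>i\<in>{..s} - {j}. ip X (col j y) (col i z)) = 0"
    proof (rule sum.neutral, rule ballI)
      fix i assume i: "i \<in> {..s} - {j}"
      show "ip X (col j y) (col i z) = 0"
        using lt[of i j y z] lt[of j i z y] assms i by (cases "i < j") (auto simp: ip_sym)
    qed
    also have "ip X (col j y) (\<lambda>x. if x = z then real (card X) else 0) = real (card X) * poly (q j) (y \<bullet> z)"
      using assms fin by (simp add: ip_def col_def if_distrib sum.delta cong: if_cong)
    finally show ?thesis using True by simp
  qed
qed

end


context setting_hyp
begin

definition E :: "nat \<Rightarrow> 'a \<Rightarrow> 'a \<Rightarrow> real" where
  "E k = (\<lambda>x y. if x \<in> X \<and> y \<in> X then poly (q k) (x \<bullet> y) / real (card X) else 0)"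

lemma act_E: "matact X (E k) f = (\<lambda>x. \<Sum>y\<in>X. (f y / real (card X)) * col k y x)"
proof
  fix x show "matact X (E k) f x = (\<Sum>y\<in>X. (f y / real (card X)) * col k y x)"
    by (cases "x \<in> X") (auto simp: matact_def E_def col_def inner_commute intro!: sum.cong)
qed

lemma E_Pol: "k \<le> s \<Longrightarrow> matact X (E k) f \<in> Pol X k"
  unfolding act_E by (rule Pol_sum[OF fin fin], rule Pol_scale[OF fin], rule col_Pol) auto

lemma ip_E: "ip X (matact X (E k) f) g = (\<Sum>y\<in>X. f y * ip X (col k y) g) / real (card X)"
proof -
  have "ip X (matact X (E k) f) g = (\<Sum>x\<in>X. \<Sum>y\<in>X. (f y / real (card X)) * col k y x * g x)"
    by (simp add: act_E ip_def sum_distrib_right)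
  also have "\<dots> = (\<Sum>y\<in>X. (f y / real (card X)) * ip X (col k y) g)"
    by (subst sum.swap) (simp add: ip_def sum_distrib_left mult.assoc)
  also have "\<dots> = (\<Sum>y\<in>X. f y * ip X (col k y) g) / real (card X)"
    by (simp add: sum_divide_distrib)
  finally show ?thesis .
qed

lemma E_perp: "1 \<le> k \<Longrightarrow> k \<le> s \<Longrightarrow> g \<in> Pol X (k - 1) \<Longrightarrow> ip X (matact X (E k) f) g = 0"
  using perp_all[of k] by (simp add: ip_E perp_def)

lemma ip_E_col:
  assumes "k \<le> s" "a \<in> X"
  shows "ip X (matact X (E k) f) (col k a) = ip X f (col k a)"
proof -
  have "ip X (matact X (E k) f) (col k a) = (\<Sum>y\<in>X. f y * (real (card X) * poly (q k) (y \<bullet> a))) / real (card X)"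
    unfolding ip_E using ortho[OF assms(1) assms(1) _ assms(2)] by (simp cong: sum.cong)
  also have "\<dots> = (\<Sum>y\<in>X. f y * poly (q k) (y \<bullet> a))"
  proof -
    have "(\<Sum>y\<in>X. f y * (real (card X) * poly (q k) (y \<bullet> a))) = real (card X) * (\<Sum>y\<in>X. f y * poly (q k) (y \<bullet> a))"
      by (simp add: sum_distrib_left algebra_simps)
    thus ?thesis using npos by simp
  qed
  also have "\<dots> = ip X f (col k a)" by (simp add: ip_def col_def inner_commute)
  finally show ?thesis .
qed

lemma FP_E:
  assumes k: "k \<le> s"
  shows "FP X k (E k)"
proof -
  have mat: "is_matrix X (E k)" by (simp add: is_matrix_def E_def)
  have inH: "matact X (E k) f \<in> Harm X k" for f
  proof (cases "k = 0")
    case True thus ?thesis using E_Pol[OF k] by (simp add: Harm_def)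
  next
    case False
    thus ?thesis using E_Pol[OF k] E_perp[of k _ f] k by (auto simp: Harm_def ipX_ip)
  qed
  have orth: "ip X (\<lambda>x. f x - matact X (E k) f x) g = 0" if g: "g \<in> Harm X k" for f g
  proof -
    have gP: "g \<in> Pol X k" using g by (simp add: Harm_def split: if_splits)
    obtain c where c: "\<forall>x\<in>X. g x = (\<Sum>j\<le>k. \<Sum>a\<in>X. c j a * col j a x)"
      using Pol_expand[OF k gP] by blast
    define u where "u = (\<lambda>x. \<Sum>j<k. \<Sum>a\<in>X. c j a * col j a x)"
    define v where "v = (\<lambda>x. \<Sum>a\<in>X. c k a * col k a x)"
    have guv: "g x = u x + v x" if "x \<in> X" for x
      using c that by (simp add: u_def v_def lessThan_Suc_atMost[symmetric])
    have vu: "ip X v u = 0"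
    proof -
      have "ip X v u = (\<Sum>j<k. \<Sum>b\<in>X. c j b * ip X v (col j b))"
        by (simp add: u_def ip_sum_right ip_scale_right fin)
      also have "\<dots> = 0"
      proof (intro sum.neutral ballI)
        fix j b assume j: "j \<in> {..<k}" and b: "b \<in> X"
        have "ip X v (col j b) = ip X (col j b) v" by (rule ip_sym)
        also have "\<dots> = (\<Sum>a\<in>X. c k a * ip X (col j b) (col k a))"
          by (simp add: v_def ip_sum_right ip_scale_right fin)
        also have "\<dots> = 0" using ortho[of k j b] j b k by simp
        finally show "c j b * ip X v (col j b) = 0" by simp
      qed
      finally show ?thesis .
    qed
    have gu: "ip X g u = 0"
    proof (cases "k = 0")
      case True thus ?thesis by (simp add: u_def ip_def)
    next
      case False
      have "u \<in> Pol X (k - 1)"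
        unfolding u_def
      proof (rule Pol_sum[OF fin finite_lessThan], rule Pol_sum[OF fin fin], rule Pol_scale[OF fin])
        fix j a assume "j \<in> {..<k}" "a \<in> X"
        moreover hence "j \<le> k - 1" by auto
        ultimately show "col j a \<in> Pol X (k - 1)" using col_Pol[of j a] Pol_mono[OF fin, of j "k - 1"] k by auto
      qed
      thus ?thesis using g False npos by (auto simp: Harm_def ipX_ip)
    qed
    have "ip X u u = ip X g u - ip X v u"
      by (subst ip_diff_left[symmetric]) (rule ip_cong, auto simp: guv)
    hence "ip X u u = 0" using gu vu by simp
    hence u0: "x \<in> X \<Longrightarrow> u x = 0" for x using ip_self_zero[OF fin] by blast
    have "ip X (\<lambda>x. f x - matact X (E k) f x) g = ip X (\<lambda>x. f x - matact X (E k) f x) v"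
      by (rule ip_cong) (auto simp: guv u0)
    also have "\<dots> = (\<Sum>a\<in>X. c k a * (ip X f (col k a) - ip X (matact X (E k) f) (col k a)))"
      by (simp add: v_def ip_sum_right ip_scale_right ip_diff_left fin algebra_simps sum_subtractf)
    also have "\<dots> = 0" using ip_E_col[OF k] by simp
    finally show ?thesis .
  qed
  show ?thesis unfolding FP_def using mat inH orth npos by (auto simp: ipX_ip)
qed

lemma Fproj_E: "k \<le> s \<Longrightarrow> Fproj X k = E k"
  using Fproj_eq[OF fin nonempty FP_E] by blast

lemma E_mult: "i \<le> s \<Longrightarrow> j \<le> s \<Longrightarrow> mmul X (E i) (E j) = (if i = j then E i else (\<lambda>x y. 0))"
proof (intro ext)
  fix x y assume ij: "i \<le> s" "j \<le> s"
  show "mmul X (E i) (E j) x y = (if i = j then E i else (\<lambda>x y. 0)) x y"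
  proof (cases "x \<in> X \<and> y \<in> X")
    case True
    have "mmul X (E i) (E j) x y = ip X (col i x) (col j y) / (real (card X))^2"
      using True by (simp add: mmul_def E_def ip_def col_def inner_commute power2_eq_square sum_divide_distrib)
    thus ?thesis using ortho[OF ij(2,1), of x y] True npos by (auto simp: E_def power2_eq_square)
  next
    case False thus ?thesis by (auto simp: mmul_def E_def)
  qed
qed

end


context setting_hyp
begin

definition Ec :: "(nat \<Rightarrow> real) \<Rightarrow> 'a \<Rightarrow> 'a \<Rightarrow> real" where
  "Ec d = (\<lambda>x y. \<Sum>j\<le>s. d j * E j x y)"

lemma Ec_mult: "mmul X (Ec d) (Ec d') = Ec (\<lambda>j. d j * d' j)"
proof (intro ext)
  fix x y
  have "mmul X (Ec d) (Ec d') x y = (\<Sum>z\<in>X. \<Sum>i\<le>s. \<Sum>j\<le>s. d i * d' j * (E i x z * E j z y))"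
    by (simp add: mmul_def Ec_def sum_product algebra_simps)
  also have "\<dots> = (\<Sum>i\<le>s. \<Sum>j\<le>s. d i * d' j * mmul X (E i) (E j) x y)"
    by (simp add: mmul_def sum_distrib_left) (subst sum.swap, rule sum.cong, simp, subst sum.swap, simp)
  also have "\<dots> = (\<Sum>i\<le>s. \<Sum>j\<le>s. if j = i then d i * d' i * E i x y else 0)"
    by (intro sum.cong refl) (auto simp: E_mult)
  also have "\<dots> = Ec (\<lambda>j. d j * d' j) x y" by (simp add: Ec_def)
  finally show "mmul X (Ec d) (Ec d') x y = Ec (\<lambda>j. d j * d' j) x y" .
qed

lemma E_Ec: "i \<le> s \<Longrightarrow> E i = Ec (\<lambda>j. if j = i then 1 else 0)"
  by (intro ext) (simp add: Ec_def sum_delta_mult)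

lemma zero_Ec: "(\<lambda>x y. 0) = Ec (\<lambda>_. 0)" by (simp add: Ec_def)

lemma Ec_add: "(\<lambda>x y. Ec d1 x y + Ec d2 x y) = Ec (\<lambda>j. d1 j + d2 j)"
  by (intro ext) (simp add: Ec_def sum.distrib algebra_simps)

lemma E_nz: "i \<le> s \<Longrightarrow> \<exists>x\<in>X. \<exists>y\<in>X. E i x y \<noteq> 0"
proof (rule ccontr)
  assume i: "i \<le> s" and "\<not> (\<exists>x\<in>X. \<exists>y\<in>X. E i x y \<noteq> 0)"
  hence z: "\<And>x y. x \<in> X \<Longrightarrow> y \<in> X \<Longrightarrow> poly (q i) (x \<bullet> y) = 0" using npos by (auto simp: E_def)
  have "\<forall>\<alpha>\<in>Aset' X. poly (q i) \<alpha> = 0" using A'_real z by blast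
  hence "q i = 0" using vanish_zero q_deg i by auto
  thus False using q_nz i by simp
qed

lemma Ec_coeff: 
  assumes i: "i \<le> s" shows "mmul X (Ec d) (E i) = (\<lambda>x y. d i * E i x y)"
proof -
  have "mmul X (Ec d) (E i) = Ec (\<lambda>j. d j * (if j = i then 1 else 0))"
    using E_Ec[OF i] Ec_mult by simp
  also have "\<dots> = (\<lambda>x y. d i * E i x y)"
  proof (intro ext)
    fix x y
    have "Ec (\<lambda>j. d j * (if j = i then 1 else 0)) x y = (\<Sum>j\<le>s. (if j = i then 1 else 0) * (d j * E j x y))"
      unfolding Ec_def by (intro sum.cong) auto
    also have "\<dots> = d i * E i x y" using i by (simp add: sum_delta_mult)
    finally show "Ec (\<lambda>j. d j * (if j = i then 1 else 0)) x y = d i * E i x y" .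
  qed
  finally show ?thesis .
qed

lemma Ec_inj: assumes "Ec d = Ec d'" "i \<le> s" shows "d i = d' i"
proof -
  obtain x y where xy: "x \<in> X" "y \<in> X" "E i x y \<noteq> 0" using E_nz[OF assms(2)] by blast
  have "(\<lambda>x y. d i * E i x y) = (\<lambda>x y. d' i * E i x y)"
    using Ec_coeff[OF assms(2), of d] Ec_coeff[OF assms(2), of d'] assms(1) by simp
  hence "d i * E i x y = d' i * E i x y" by meson
  thus ?thesis using xy by simp
qed

abbreviation BM where "BM \<equiv> bose_mesner X (Aset' X) (Rel X)"

lemma sum_adj: "(\<Sum>\<alpha>\<in>Aset' X. c \<alpha> * adj X (Rel X \<alpha>) x y) = (if x \<in> X \<and> y \<in> X then c (x \<bullet> y) else 0)"
proof (cases "x \<in> X \<and> y \<in> X")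
  case True
  have "(\<Sum>\<alpha>\<in>Aset' X. c \<alpha> * adj X (Rel X \<alpha>) x y) = (\<Sum>\<alpha>\<in>Aset' X. if \<alpha> = x \<bullet> y then c \<alpha> else 0)"
    by (rule sum.cong) (auto simp: adj_def Rel_def True)
  also have "\<dots> = c (x \<bullet> y)" using finite_A' inner_in_A' True by (simp add: sum.delta')
  finally show ?thesis using True by simp
qed (auto simp: adj_def Rel_def)

lemma BM_iff: "M \<in> BM \<longleftrightarrow> (\<exists>c. M = (\<lambda>x y. if x \<in> X \<and> y \<in> X then c (x \<bullet> y) else 0))"
  unfolding bose_mesner_def by (simp only: mem_Collect_eq sum_adj)

lemma form_Ec: "\<exists>d. (\<lambda>x y. if x \<in> X \<and> y \<in> X then c (x \<bullet> y) else 0) = Ec d"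
proof -
  obtain w where w: "degree w \<le> s" "\<forall>\<alpha>\<in>Aset' X. poly w \<alpha> = c \<alpha>" using interp_A'[of c] by blast
  obtain e where e: "w = (\<Sum>j\<le>s. smult (e j) (q j))" using expand_q[OF le_refl w(1)] by blast
  have "(\<lambda>x y. if x \<in> X \<and> y \<in> X then c (x \<bullet> y) else 0) = Ec (\<lambda>j. real (card X) * e j)"
  proof (intro ext)
    fix x y
    show "(if x \<in> X \<and> y \<in> X then c (x \<bullet> y) else 0) = Ec (\<lambda>j. real (card X) * e j) x y"
    proof (cases "x \<in> X \<and> y \<in> X")
      case True
      have "c (x \<bullet> y) = poly w (x \<bullet> y)" using w(2) inner_in_A' True by simp
      also have "\<dots> = (\<Sum>j\<le>s. e j * poly (q j) (x \<bullet> y))" by (simp add: e poly_sum)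
      also have "\<dots> = Ec (\<lambda>j. real (card X) * e j) x y"
        using True npos by (simp add: Ec_def E_def)
      finally show ?thesis using True by simp
    qed (auto simp: Ec_def E_def)
  qed
  thus ?thesis by blast
qed

lemma Ec_form: "Ec d = (\<lambda>x y. if x \<in> X \<and> y \<in> X then (\<Sum>j\<le>s. d j * poly (q j) (x \<bullet> y) / real (card X)) else 0)"
  by (intro ext) (auto simp: Ec_def E_def)

lemma BM_Ec: "M \<in> BM \<longleftrightarrow> (\<exists>d. M = Ec d)"
proof
  assume "M \<in> BM"
  then obtain c where c: "M = (\<lambda>x y. if x \<in> X \<and> y \<in> X then c (x \<bullet> y) else 0)" using BM_iff by blast
  obtain d where "(\<lambda>x y. if x \<in> X \<and> y \<in> X then c (x \<bullet> y) else 0) = Ec d" using form_Ec by blast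
  thus "\<exists>d. M = Ec d" using c by blast
next
  assume "\<exists>d. M = Ec d"
  then obtain d where d: "M = Ec d" by blast
  show "M \<in> BM" unfolding BM_iff d Ec_form
    by (rule exI[of _ "\<lambda>t. \<Sum>j\<le>s. d j * poly (q j) t / real (card X)"]) (rule refl)
qed

lemma idem_Ec: "idem X (Ec d) \<longleftrightarrow> (\<forall>j\<le>s. d j * d j = d j)"
proof
  assume "idem X (Ec d)"
  hence "Ec (\<lambda>j. d j * d j) = Ec d" by (simp add: idem_def Ec_mult)
  thus "\<forall>j\<le>s. d j * d j = d j" using Ec_inj by blast
next
  assume h: "\<forall>j\<le>s. d j * d j = d j"
  have "Ec (\<lambda>j. d j * d j) = Ec d" unfolding Ec_def using h by (intro ext sum.cong) auto
  thus "idem X (Ec d)" by (simp add: idem_def Ec_mult)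
qed

lemma Ec_zero_iff: "Ec d = (\<lambda>x y. 0) \<longleftrightarrow> (\<forall>j\<le>s. d j = 0)"
proof
  assume "Ec d = (\<lambda>x y. 0)"
  thus "\<forall>j\<le>s. d j = 0" unfolding zero_Ec using Ec_inj by fastforce
next
  assume "\<forall>j\<le>s. d j = 0" thus "Ec d = (\<lambda>x y. 0)" by (intro ext) (simp add: Ec_def)
qed

lemma Ec_eq_iff: "Ec d = Ec d' \<longleftrightarrow> (\<forall>j\<le>s. d j = d' j)"
  using Ec_inj by (auto simp: Ec_def intro!: ext sum.cong)

lemma prim_E: "primitive_idempotents X (Aset' X) (Rel X) = E ` {0..s}"
proof
  show "E ` {0..s} \<subseteq> primitive_idempotents X (Aset' X) (Rel X)"
  proof
    fix M assume "M \<in> E ` {0..s}"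
    then obtain k where k: "k \<le> s" "M = E k" by auto
    define \<delta> where "\<delta> = (\<lambda>j. if j = k then 1 else (0::real))"
    have M: "M = Ec \<delta>" using E_Ec k by (simp add: \<delta>_def)
    have "M \<in> BM" using M BM_Ec by blast
    moreover have "idem X M" unfolding M idem_Ec by (simp add: \<delta>_def)
    moreover have "M \<noteq> (\<lambda>x y. 0)" unfolding M Ec_zero_iff using k by (auto simp: \<delta>_def)
    moreover have "\<not> (\<exists>E1\<in>BM. \<exists>E2\<in>BM. idem X E1 \<and> idem X E2 \<and> E1 \<noteq> (\<lambda>x y. 0) \<and> E2 \<noteq> (\<lambda>x y. 0) \<and>
          mmul X E1 E2 = (\<lambda>x y. 0) \<and> M = (\<lambda>x y. E1 x y + E2 x y))"
    proof
      assume "\<exists>E1\<in>BM. \<exists>E2\<in>BM. idem X E1 \<and> idem X E2 \<and> E1 \<noteq> (\<lambda>x y. 0) \<and> E2 \<noteq> (\<lambda>x y. 0) \<and>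
          mmul X E1 E2 = (\<lambda>x y. 0) \<and> M = (\<lambda>x y. E1 x y + E2 x y)"
      then obtain E1 E2 where hE: "E1 \<in> BM" "E2 \<in> BM" "idem X E1" "idem X E2" "E1 \<noteq> (\<lambda>x y. 0)" "E2 \<noteq> (\<lambda>x y. 0)"
          "mmul X E1 E2 = (\<lambda>x y. 0)" "M = (\<lambda>x y. E1 x y + E2 x y)" by blast
      obtain d1 where e1: "E1 = Ec d1" using hE(1) BM_Ec by blast
      obtain d2 where e2: "E2 = Ec d2" using hE(2) BM_Ec by blast
      have h: "idem X (Ec d1)" "idem X (Ec d2)" "Ec d1 \<noteq> (\<lambda>x y. 0)" "Ec d2 \<noteq> (\<lambda>x y. 0)"
          "mmul X (Ec d1) (Ec d2) = (\<lambda>x y. 0)" "M = (\<lambda>x y. Ec d1 x y + Ec d2 x y)"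
        using hE unfolding e1 e2 by auto
      have i1: "\<forall>j\<le>s. d1 j * d1 j = d1 j" and i2: "\<forall>j\<le>s. d2 j * d2 j = d2 j" using h(1,2) idem_Ec by auto
      have pr: "\<forall>j\<le>s. d1 j * d2 j = 0" using h(5) by (simp add: Ec_mult Ec_zero_iff)
      have sm: "\<forall>j\<le>s. d1 j + d2 j = \<delta> j" using h(6) M by (simp add: Ec_add Ec_eq_iff)
      obtain j1 where j1: "j1 \<le> s" "d1 j1 \<noteq> 0" using h(3) Ec_zero_iff by auto
      obtain j2 where j2: "j2 \<le> s" "d2 j2 \<noteq> 0" using h(4) Ec_zero_iff by auto
      have "d1 j1 = 1" using i1 j1 by (metis mult_cancel_right2)
      hence "d2 j1 = 0" using pr j1 by force
      hence "j1 = k" using sm j1 \<open>d1 j1 = 1\<close> by (auto simp: \<delta>_def split: if_splits)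
      have "d2 j2 = 1" using i2 j2 by (metis mult_cancel_right2)
      hence "d1 j2 = 0" using pr j2 by force
      hence "j2 = k" using sm j2 \<open>d2 j2 = 1\<close> by (auto simp: \<delta>_def split: if_splits)
      show False using \<open>j1 = k\<close> \<open>j2 = k\<close> \<open>d1 j1 = 1\<close> \<open>d1 j2 = 0\<close> by simp
    qed
    ultimately show "M \<in> primitive_idempotents X (Aset' X) (Rel X)"
      unfolding primitive_idempotents_def by blast
  qed
next
  show "primitive_idempotents X (Aset' X) (Rel X) \<subseteq> E ` {0..s}"
  proof
    fix M assume M: "M \<in> primitive_idempotents X (Aset' X) (Rel X)"
    then obtain d where d: "M = Ec d" using BM_Ec unfolding primitive_idempotents_def by blast
    have i: "\<forall>j\<le>s. d j * d j = d j" using M d idem_Ec unfolding primitive_idempotents_def by blast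
    have nz: "M \<noteq> (\<lambda>x y. 0)" using M unfolding primitive_idempotents_def by blast
    obtain k where k: "k \<le> s" "d k \<noteq> 0" using nz d Ec_zero_iff by auto
    have dk: "d k = 1" using i k by (metis mult_cancel_right2)
    define \<delta> where "\<delta> = (\<lambda>j. if j = k then 1 else (0::real))"
    show "M \<in> E ` {0..s}"
    proof (cases "\<forall>j\<le>s. d j = \<delta> j")
      case True
      hence "M = E k" using d E_Ec[OF k(1)] Ec_eq_iff by (simp add: \<delta>_def)
      thus ?thesis using k by auto
    next
      case False
      then obtain j where j: "j \<le> s" "d j \<noteq> \<delta> j" by blast
      have jk: "j \<noteq> k" using j dk by (auto simp: \<delta>_def)
      have dj: "d j = 1" using i j jk by (simp add: \<delta>_def) (metis mult_cancel_right2)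
      define d2 where "d2 = (\<lambda>i. d i - \<delta> i)"
      have "Ec \<delta> \<in> BM" "Ec d2 \<in> BM" using BM_Ec by blast+
      moreover have "idem X (Ec \<delta>)" by (simp add: idem_Ec \<delta>_def)
      moreover have "idem X (Ec d2)" unfolding idem_Ec d2_def using i dk by (auto simp: \<delta>_def)
      moreover have "Ec \<delta> \<noteq> (\<lambda>x y. 0)" using k by (auto simp: Ec_zero_iff \<delta>_def)
      moreover have "Ec d2 \<noteq> (\<lambda>x y. 0)" using j jk dj by (auto simp: Ec_zero_iff \<delta>_def d2_def)
      moreover have "mmul X (Ec \<delta>) (Ec d2) = (\<lambda>x y. 0)"
        unfolding Ec_mult Ec_zero_iff using dk by (auto simp: \<delta>_def d2_def)
      moreover have "M = (\<lambda>x y. Ec \<delta> x y + Ec d2 x y)"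
        unfolding Ec_add d Ec_eq_iff by (simp add: d2_def)
      ultimately have False using M unfolding primitive_idempotents_def by blast
      thus ?thesis ..
    qed
  qed
qed

lemma scheme: "sym_assoc_scheme X (Aset' X) (Rel X)"
proof -
  have A: "\<forall>\<alpha>\<in>Aset' X. Rel X \<alpha> \<subseteq> X \<times> X \<and> Rel X \<alpha> \<noteq> {}"
    using A'_real by (fastforce simp: Rel_def)
  have B: "\<forall>x\<in>X. \<forall>y\<in>X. \<exists>!\<alpha>. \<alpha> \<in> Aset' X \<and> (x, y) \<in> Rel X \<alpha>"
    using inner_in_A' by (auto simp: Rel_def)
  have C: "\<exists>\<alpha>\<in>Aset' X. Rel X \<alpha> = Id_on X"
  proof (rule bexI[of _ "real DIM('a)"])
    show "Rel X (real DIM('a)) = Id_on X" using eq_m_iff by (auto simp: Rel_def Id_on_def)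
    show "real DIM('a) \<in> Aset' X" by (simp add: Aset'_def)
  qed
  have D: "\<forall>\<alpha>\<in>Aset' X. \<forall>x y. (x, y) \<in> Rel X \<alpha> \<longrightarrow> (y, x) \<in> Rel X \<alpha>"
    by (auto simp: Rel_def inner_commute)
  have F: "\<exists>p::nat. \<forall>x y. (x, y) \<in> Rel X \<gamma> \<longrightarrow> card {z \<in> X. (x, z) \<in> Rel X \<alpha> \<and> (z, y) \<in> Rel X \<beta>} = p"
    if g: "\<gamma> \<in> Aset' X" for \<alpha> \<beta> \<gamma>
  proof -
    have "adj X (Rel X \<alpha>) \<in> BM" unfolding BM_iff
      by (rule exI[of _ "\<lambda>t. if t = \<alpha> then 1 else 0"]) (auto simp: adj_def Rel_def fun_eq_iff)
    then obtain d1 where d1: "adj X (Rel X \<alpha>) = Ec d1" using BM_Ec by blast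
    have "adj X (Rel X \<beta>) \<in> BM" unfolding BM_iff
      by (rule exI[of _ "\<lambda>t. if t = \<beta> then 1 else 0"]) (auto simp: adj_def Rel_def fun_eq_iff)
    then obtain d2 where d2: "adj X (Rel X \<beta>) = Ec d2" using BM_Ec by blast
    have "mmul X (adj X (Rel X \<alpha>)) (adj X (Rel X \<beta>)) \<in> BM" unfolding d1 d2 Ec_mult using BM_Ec by blast
    then obtain c where c: "mmul X (adj X (Rel X \<alpha>)) (adj X (Rel X \<beta>)) = (\<lambda>x y. if x \<in> X \<and> y \<in> X then c (x \<bullet> y) else 0)"
      using BM_iff by blast
    have cnt: "real (card {z \<in> X. (x, z) \<in> Rel X \<alpha> \<and> (z, y) \<in> Rel X \<beta>}) = c (x \<bullet> y)"
      if "x \<in> X" "y \<in> X" for x y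
    proof -
      have "real (card {z \<in> X. (x, z) \<in> Rel X \<alpha> \<and> (z, y) \<in> Rel X \<beta>})
          = (\<Sum>z\<in>X. adj X (Rel X \<alpha>) x z * adj X (Rel X \<beta>) z y)"
      proof -
        have st: "{z \<in> X. (x, z) \<in> Rel X \<alpha> \<and> (z, y) \<in> Rel X \<beta>} = {z\<in>X. x \<bullet> z = \<alpha> \<and> z \<bullet> y = \<beta>}"
          using that by (auto simp: Rel_def)
        have "real (card {z\<in>X. x \<bullet> z = \<alpha> \<and> z \<bullet> y = \<beta>}) = (\<Sum>z\<in>{z\<in>X. x \<bullet> z = \<alpha> \<and> z \<bullet> y = \<beta>}. (1::real))"
          by simp
        also have "\<dots> = (\<Sum>z\<in>X. if x \<bullet> z = \<alpha> \<and> z \<bullet> y = \<beta> then 1 else 0)"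
          by (rule sum.inter_filter[OF fin])
        also have "\<dots> = (\<Sum>z\<in>X. adj X (Rel X \<alpha>) x z * adj X (Rel X \<beta>) z y)"
          using that by (intro sum.cong refl) (auto simp: adj_def Rel_def)
        finally show ?thesis unfolding st .
      qed
      also have "\<dots> = c (x \<bullet> y)" using c that by (simp add: mmul_def fun_eq_iff)
      finally show ?thesis .
    qed
    obtain x0 y0 where xy0: "x0 \<in> X" "y0 \<in> X" "x0 \<bullet> y0 = \<gamma>" using A'_real g by blast
    show ?thesis
    proof (rule exI[of _ "card {z \<in> X. (x0, z) \<in> Rel X \<alpha> \<and> (z, y0) \<in> Rel X \<beta>}"], intro allI impI)
      fix x y assume "(x, y) \<in> Rel X \<gamma>"
      hence xy: "x \<in> X" "y \<in> X" "x \<bullet> y = \<gamma>" by (auto simp: Rel_def)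
      have "real (card {z \<in> X. (x, z) \<in> Rel X \<alpha> \<and> (z, y) \<in> Rel X \<beta>})
          = real (card {z \<in> X. (x0, z) \<in> Rel X \<alpha> \<and> (z, y0) \<in> Rel X \<beta>})"
        using cnt[OF xy(1,2)] cnt[OF xy0(1,2)] xy(3) xy0(3) by simp
      thus "card {z \<in> X. (x, z) \<in> Rel X \<alpha> \<and> (z, y) \<in> Rel X \<beta>} = card {z \<in> X. (x0, z) \<in> Rel X \<alpha> \<and> (z, y0) \<in> Rel X \<beta>}"
        by (simp only: of_nat_eq_iff)
    qed
  qed
  have F': "\<forall>\<alpha>\<in>Aset' X. \<forall>\<beta>\<in>Aset' X. \<forall>\<gamma>\<in>Aset' X. \<exists>p::nat. \<forall>x y. (x, y) \<in> Rel X \<gamma> \<longrightarrow>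
        card {z \<in> X. (x, z) \<in> Rel X \<alpha> \<and> (z, y) \<in> Rel X \<beta>} = p"
    using F by blast
  show ?thesis unfolding sym_assoc_scheme_def
    by (intro conjI fin finite_A' A B C D F')
qed

lemma Qpoly_third:
  "\<forall>i\<le>s. \<exists>v :: real poly. degree v = i \<and>
        (\<forall>x\<in>X. \<forall>y\<in>X. real (card X) * Fproj X i x y = poly v (real (card X) * Fproj X 1 x y))"
proof (intro allI impI)
  fix i assume i: "i \<le> s"
  have s1: "1 \<le> s" using s_pos .
  define a where "a = coeff (q 1) 1"
  define b where "b = coeff (q 1) 0"
  have a0: "a \<noteq> 0" using q_nz[OF s1] q_deg[OF s1] leading_coeff_0_iff[of "q 1"] by (simp add: a_def)
  have q1: "poly (q 1) t = b + a * t" for t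
    using poly_altdef[of "q 1" t] q_deg[OF s1] by (simp add: a_def b_def)
  define v where "v = pcompose (q i) [:- b / a, 1 / a:]"
  have dv: "degree v = i" using q_deg[OF i] a0 by (simp add: v_def degree_pcompose)
  have "real (card X) * Fproj X i x y = poly v (real (card X) * Fproj X 1 x y)" if "x \<in> X" "y \<in> X" for x y
  proof -
    have "real (card X) * Fproj X i x y = poly (q i) (x \<bullet> y)" using Fproj_E[OF i] that npos by (simp add: E_def)
    moreover have "real (card X) * Fproj X 1 x y = b + a * (x \<bullet> y)" using Fproj_E[OF s1] that npos q1 by (simp add: E_def)
    moreover have "poly v (b + a * (x \<bullet> y)) = poly (q i) (x \<bullet> y)" using a0
      by (simp add: v_def poly_pcompose field_simps)
    ultimately show ?thesis by simp
  qed
  thus "\<exists>v :: real poly. degree v = i \<and>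
        (\<forall>x\<in>X. \<forall>y\<in>X. real (card X) * Fproj X i x y = poly v (real (card X) * Fproj X 1 x y))"
    using dv by blast
qed

lemma hyp_Q: "Q_poly_scheme X s"
proof -
  have "Fproj X ` {0..s} = E ` {0..s}" using Fproj_E by (intro image_cong) auto
  thus ?thesis unfolding Q_poly_scheme_def using scheme prim_E Qpoly_third by simp
qed

end


context setting
begin

lemma pp_smult_right: "pp p (smult c r) = c * pp p r"
  by (simp add: pp_def sum_distrib_left mult_ac)

lemma des_sum: "y \<in> X \<Longrightarrow> (\<Sum>x\<in>X. x \<bullet> y) = 0"
proof -
  assume y: "y \<in> X"
  have "(\<Sum>x\<in>X. x \<bullet> y) = (\<Sum>x\<in>X. y \<bullet> x)" by (simp add: inner_commute)
  thus ?thesis using des y by (simp add: design2_def)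
qed

lemma des_sq: "x \<in> X \<Longrightarrow> y \<in> X \<Longrightarrow> (\<Sum>z\<in>X. (x \<bullet> z) * (z \<bullet> y)) = real (card X) * (x \<bullet> y)"
proof -
  assume xy: "x \<in> X" "y \<in> X"
  hence "(1 / real (card X)) * (\<Sum>z\<in>X. (x \<bullet> z) * (z \<bullet> y)) = x \<bullet> y" using des by (simp add: design2_def)
  thus ?thesis using npos by (simp add: field_simps)
qed

lemma act_Gram: "matact X (Gram X) f = (\<lambda>x. if x \<in> X then (\<Sum>y\<in>X. (f y / real (card X)) * (y \<bullet> x)) else 0)"
  by (intro ext) (auto simp: matact_def Gram_def inner_commute intro!: sum.cong)

lemma Pol0_const:
  assumes "g \<in> Pol X 0" shows "\<exists>C. \<forall>x\<in>X. g x = C"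
proof -
  obtain P where P: "\<forall>a\<in>X. degree (P a) \<le> 0" "g = (\<lambda>x. if x \<in> X then (\<Sum>a\<in>X. poly (P a) (a \<bullet> x)) else 0)"
    using assms by (auto simp: Pol_def)
  have "poly (P a) t = coeff (P a) 0" if "a \<in> X" for a t
    using poly_k_sum[of "P a" 0 t] P(1) that by simp
  thus ?thesis using P(2) by (intro exI[of _ "\<Sum>a\<in>X. coeff (P a) 0"]) auto
qed

lemma Pol1_form:
  assumes "h \<in> Pol X 1" shows "\<exists>C c. \<forall>x\<in>X. h x = C + (\<Sum>a\<in>X. c a * (a \<bullet> x))"
proof -
  obtain P where P: "\<forall>a\<in>X. degree (P a) \<le> 1" "h = (\<lambda>x. if x \<in> X then (\<Sum>a\<in>X. poly (P a) (a \<bullet> x)) else 0)"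
    using assms by (auto simp: Pol_def)
  have "poly (P a) t = coeff (P a) 0 + coeff (P a) 1 * t" if "a \<in> X" for a t
    using poly_k_sum[of "P a" 1 t] P(1) that by simp
  hence "\<forall>x\<in>X. h x = (\<Sum>a\<in>X. coeff (P a) 0) + (\<Sum>a\<in>X. coeff (P a) 1 * (a \<bullet> x))"
    using P(2) by (simp add: sum.distrib)
  thus ?thesis by (intro exI[of _ "\<Sum>a\<in>X. coeff (P a) 0"] exI[of _ "\<lambda>a. coeff (P a) 1"])
qed

lemma one_Pol0: "(\<lambda>x. if x \<in> X then 1 else 0) \<in> Pol X 0"
proof -
  have "(\<lambda>x. if x \<in> X then (\<Sum>a\<in>X. poly [:1 / real (card X):] (a \<bullet> x)) else 0) \<in> Pol X 0"
    by (rule Pol_I) simp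
  moreover have "(\<lambda>x. if x \<in> X then (\<Sum>a\<in>X. poly [:1 / real (card X):] (a \<bullet> x)) else 0) = (\<lambda>x. if x \<in> X then 1 else 0)"
    using npos by (auto simp: fun_eq_iff)
  ultimately show ?thesis by simp
qed

lemma FP_Gram: "FP X 1 (Gram X)"
proof -
  have mat: "is_matrix X (Gram X)" by (simp add: is_matrix_def Gram_def)
  have inP: "matact X (Gram X) f \<in> Pol X 1" for f
  proof -
    have "(\<lambda>x. if x \<in> X then (\<Sum>a\<in>X. poly [:0, f a / real (card X):] (a \<bullet> x)) else 0) \<in> Pol X 1"
      by (rule Pol_I) simp
    moreover have "(\<lambda>x. if x \<in> X then (\<Sum>a\<in>X. poly [:0, f a / real (card X):] (a \<bullet> x)) else 0)
       = matact X (Gram X) f"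
      unfolding act_Gram by (intro ext) (auto intro!: sum.cong)
    ultimately show ?thesis by simp
  qed
  have perp0: "ip X (matact X (Gram X) f) g = 0" if g: "g \<in> Pol X 0" for f g
  proof -
    obtain C where C: "\<forall>x\<in>X. g x = C" using Pol0_const[OF g] by blast
    have "ip X (matact X (Gram X) f) g = (\<Sum>x\<in>X. (\<Sum>y\<in>X. (f y / real (card X)) * (y \<bullet> x)) * C)"
      unfolding act_Gram ip_def using C by (intro sum.cong) auto
    also have "\<dots> = (\<Sum>x\<in>X. \<Sum>y\<in>X. (f y / real (card X)) * C * (y \<bullet> x))"
      by (simp add: sum_distrib_right sum_distrib_left mult_ac)
    also have "\<dots> = (\<Sum>y\<in>X. \<Sum>x\<in>X. (f y / real (card X)) * C * (y \<bullet> x))" by (rule sum.swap)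
    also have "\<dots> = (\<Sum>y\<in>X. (f y / real (card X)) * C * (\<Sum>x\<in>X. y \<bullet> x))"
      by (simp add: sum_distrib_left)
    also have "\<dots> = 0" using des by (simp add: design2_def)
    finally show ?thesis .
  qed
  have orth: "ip X (\<lambda>x. f x - matact X (Gram X) f x) h = 0" if h: "h \<in> Harm X 1" for f h
  proof -
    have hP: "h \<in> Pol X 1" and hp: "\<forall>g\<in>Pol X 0. ipX X h g = 0" using h by (auto simp: Harm_def)
    obtain C c where Cc: "\<forall>x\<in>X. h x = C + (\<Sum>a\<in>X. c a * (a \<bullet> x))" using Pol1_form[OF hP] by blast
    have "ipX X h (\<lambda>x. if x \<in> X then 1 else 0) = 0" using hp one_Pol0 by blast
    hence "(\<Sum>x\<in>X. h x) = 0" using npos by (simp add: ipX_ip ip_def)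
    moreover have "(\<Sum>x\<in>X. h x) = real (card X) * C + (\<Sum>a\<in>X. c a * (\<Sum>x\<in>X. a \<bullet> x))"
    proof -
      have "(\<Sum>x\<in>X. h x) = (\<Sum>x\<in>X. C + (\<Sum>a\<in>X. c a * (a \<bullet> x)))" using Cc by simp
      also have "\<dots> = real (card X) * C + (\<Sum>a\<in>X. c a * (\<Sum>x\<in>X. a \<bullet> x))"
        by (simp add: sum.distrib sum_distrib_left) (rule sum.swap)
      finally show ?thesis .
    qed
    moreover have "(\<Sum>x\<in>X. a \<bullet> x) = 0" if "a \<in> X" for a using des_sum[OF that] by (simp add: inner_commute)
    ultimately have "C = 0" using npos by simp
    hence hx: "\<forall>x\<in>X. h x = (\<Sum>a\<in>X. c a * (a \<bullet> x))" using Cc by simp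
    have "ip X (matact X (Gram X) f) h = (\<Sum>x\<in>X. (\<Sum>y\<in>X. (f y / real (card X)) * (y \<bullet> x)) * (\<Sum>a\<in>X. c a * (a \<bullet> x)))"
      unfolding act_Gram ip_def using hx by simp
    also have "\<dots> = (\<Sum>x\<in>X. \<Sum>y\<in>X. \<Sum>a\<in>X. ((f y / real (card X)) * (y \<bullet> x)) * (c a * (a \<bullet> x)))"
      by (simp add: sum_product)
    also have "\<dots> = (\<Sum>y\<in>X. \<Sum>x\<in>X. \<Sum>a\<in>X. ((f y / real (card X)) * (y \<bullet> x)) * (c a * (a \<bullet> x)))"
      by (rule sum.swap)
    also have "\<dots> = (\<Sum>y\<in>X. \<Sum>a\<in>X. \<Sum>x\<in>X. ((f y / real (card X)) * (y \<bullet> x)) * (c a * (a \<bullet> x)))"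
      by (rule sum.cong[OF refl], rule sum.swap)
    also have "\<dots> = (\<Sum>y\<in>X. \<Sum>a\<in>X. (f y / real (card X)) * c a * (\<Sum>x\<in>X. (y \<bullet> x) * (x \<bullet> a)))"
      by (simp add: sum_distrib_left inner_commute mult_ac)
    also have "\<dots> = (\<Sum>y\<in>X. \<Sum>a\<in>X. f y * c a * (y \<bullet> a))"
      using npos by (intro sum.cong refl) (simp add: des_sq)
    also have "\<dots> = ip X f h"
      unfolding ip_def using hx by (intro sum.cong refl) (simp add: sum_distrib_left inner_commute mult_ac)
    finally show ?thesis by (simp add: ip_diff_left)
  qed
  have "matact X (Gram X) f \<in> Harm X 1" for f
    using inP perp0 by (auto simp: Harm_def ipX_ip)
  thus ?thesis unfolding FP_def using mat orth npos by (auto simp: ipX_ip)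
qed

lemma Fproj_1: "Fproj X 1 = Gram X"
  using Fproj_eq[OF fin nonempty FP_Gram] .

lemma Q_imp:
  assumes Q: "Q_poly_scheme X s"
  shows "\<forall>x\<in>X. \<forall>y\<in>X. Fproj X s x y = (1 / real (card X)) * poly (q s) (real (card X) * Gram X x y)"
proof -
  define n where "n = real (card X)"
  have n0: "n > 0" using npos by (simp add: n_def)
  have nG: "n * Gram X x y = x \<bullet> y" if "x \<in> X" "y \<in> X" for x y using that n0 by (simp add: Gram_def n_def)
  obtain V where V: "degree V = s" "\<forall>x\<in>X. \<forall>y\<in>X. n * Fproj X s x y = poly V (n * Fproj X 1 x y)"
    using Q by (auto simp: Q_poly_scheme_def n_def)
  have V2: "\<forall>x\<in>X. \<forall>y\<in>X. n * Fproj X s x y = poly V (x \<bullet> y)"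
    using V(2) nG unfolding Fproj_1 by simp
  have FV: "Fproj X s x y = poly V (x \<bullet> y) / n" if "x \<in> X" "y \<in> X" for x y
    using V2 that n0 by (simp add: field_simps)
  define F where "F = Fproj X s"
  have P: "projprop X (Harm X s) F" unfolding F_def by (rule Fproj_prop[OF fin nonempty])
  define Fc where "Fc = (\<lambda>y x. if x \<in> X then F x y else 0)"
  have FcH: "Fc y \<in> Harm X s" if "y \<in> X" for y
  proof -
    have "matact X F (\<lambda>z. if z = y then 1 else 0) = Fc y"
      using that fin by (intro ext) (simp add: matact_def Fc_def if_distrib sum.delta cong: if_cong)
    moreover have "matact X F (\<lambda>z. if z = y then 1 else 0) \<in> Harm X s" using P by (simp add: projprop_def)
    ultimately show ?thesis by simp
  qed
  have Vq: "pp V (q j) = 0" if j: "j < s" for j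
  proof -
    have "pp V (q j) = (\<Sum>y\<in>X. \<Sum>x\<in>X. poly V (x \<bullet> y) * poly (q j) (x \<bullet> y))"
      unfolding pp_def by (rule sum.swap)
    also have "\<dots> = (\<Sum>y\<in>X. n * ip X (Fc y) (col j y))"
      unfolding ip_def using FV n0 by (intro sum.cong refl) (simp add: Fc_def col_def sum_distrib_left inner_commute F_def)
    also have "\<dots> = 0"
    proof (intro sum.neutral ballI)
      fix y assume y: "y \<in> X"
      have "j \<le> s - 1" using j by auto
      hence "col j y \<in> Pol X (s - 1)" using col_Pol[of j y] y j Pol_mono[OF fin, of j "s - 1"] by auto
      hence "ipX X (Fc y) (col j y) = 0" using FcH[OF y] s_pos by (auto simp: Harm_def)
      thus "n * ip X (Fc y) (col j y) = 0" using n0 by (simp add: ipX_ip n_def)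
    qed
    finally show ?thesis .
  qed
  have VV: "pp V V = n^2 * poly V (real DIM('a))"
  proof -
    have col_sq: "(\<Sum>x\<in>X. F x y * F x y) = poly V (real DIM('a)) / n" if y: "y \<in> X" for y
    proof -
      have "matact X F (Fc y) = Fc y"
        by (rule projprop_fix[OF fin P FcH[OF y]]) (auto intro: Harm_diff[OF fin] Harm_out)
      hence "matact X F (Fc y) y = Fc y y" by simp
      hence "(\<Sum>z\<in>X. F y z * F z y) = F y y" using y by (simp add: matact_def Fc_def cong: if_cong)
      moreover have "F y z = F z y" if "z \<in> X" for z using FV[OF y that] FV[OF that y]
        by (simp add: F_def inner_commute)
      ultimately have "(\<Sum>z\<in>X. F z y * F z y) = F y y" by (metis (no_types, lifting) sum.cong)
      thus ?thesis using FV[OF y y] inner_self_m[OF y] by (simp add: F_def)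
    qed
    have "pp V V = (\<Sum>y\<in>X. \<Sum>x\<in>X. poly V (x \<bullet> y) * poly V (x \<bullet> y))" unfolding pp_def by (rule sum.swap)
    also have "\<dots> = (\<Sum>y\<in>X. \<Sum>x\<in>X. n^2 * (F x y * F x y))"
    proof (intro sum.cong refl)
      fix y x assume "y \<in> X" "x \<in> X"
      hence "poly V (x \<bullet> y) = n * F x y" using V2 by (simp add: F_def)
      thus "poly V (x \<bullet> y) * poly V (x \<bullet> y) = n^2 * (F x y * F x y)" by (simp add: power2_eq_square)
    qed
    also have "\<dots> = (\<Sum>y\<in>X. n^2 * (\<Sum>x\<in>X. F x y * F x y))"
      by (simp add: sum_distrib_left)
    also have "\<dots> = (\<Sum>y\<in>X. n * poly V (real DIM('a)))"
      using col_sq n0 by (intro sum.cong refl) (simp add: power2_eq_square)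
    also have "\<dots> = n^2 * poly V (real DIM('a))" by (simp add: n_def power2_eq_square)
    finally show ?thesis .
  qed
  obtain c where c: "V = (\<Sum>j\<le>s. smult (c j) (q j))" using expand_q[of s V] V(1) by auto
  have c0: "c j = 0" if "j < s" for j
  proof -
    have "c j * n^2 * poly (q j) (real DIM('a)) = 0"
      using pp_expand[of j s c] Vq[OF that] that c by (simp add: n_def)
    thus ?thesis using n0 qm_pos[of j] that by simp
  qed
  have Vc: "V = smult (c s) (q s)"
  proof -
    have "V = (\<Sum>j\<in>insert s {..<s}. smult (c j) (q j))" using c by (simp add: lessThan_Suc_atMost[symmetric] lessThan_Suc)
    also have "\<dots> = smult (c s) (q s)" using c0 by simp
    finally show ?thesis .
  qed
  have cs: "c s \<noteq> 0"
  proof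
    assume "c s = 0" hence "V = 0" using Vc by simp
    thus False using V(1) s_pos by simp
  qed
  have "pp V V = c s * c s * (n^2 * poly (q s) (real DIM('a)))"
    using pp_q[of s s] unfolding Vc pp_smult_left pp_smult_right by (simp add: n_def)
  moreover have "pp V V = n^2 * (c s * poly (q s) (real DIM('a)))" using VV Vc by simp
  ultimately have "c s * c s = c s" using n0 qm_pos[of s] by simp
  hence "c s = 1" using cs by simp
  hence "V = q s" using Vc by simp
  thus ?thesis using FV nG by (simp add: n_def)
qed

end

theorem lemma4p2:
  fixes X :: "'a::euclidean_space set" and s :: nat and q :: "nat \<Rightarrow> real poly"
  assumes "DIM('a) \<ge> 1"
    and "finite X" and "on_sphere X"
    and "design2 X"
    and "s_distance X s"
    and "degX X = s"
    and "predegree X s q"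
  shows "Q_poly_scheme X s \<longleftrightarrow>
    (\<forall>x\<in>X. \<forall>y\<in>X. Fproj X s x y =
        (1 / real (card X)) * poly (q s) (real (card X) * Gram X x y))"
proof -
  have S: "setting X s q" using assms by (simp add: setting_def)
  show ?thesis
  proof
    assume "Q_poly_scheme X s"
    thus "\<forall>x\<in>X. \<forall>y\<in>X. Fproj X s x y =
        (1 / real (card X)) * poly (q s) (real (card X) * Gram X x y)"
      using setting.Q_imp[OF S] by blast
  next
    assume H: "\<forall>x\<in>X. \<forall>y\<in>X. Fproj X s x y =
        (1 / real (card X)) * poly (q s) (real (card X) * Gram X x y)"
    have SH: "setting_hyp X s q" using S H by (simp add: setting_hyp_def setting_hyp_axioms_def)
    show "Q_poly_scheme X s" using setting_hyp.hyp_Q[OF SH] .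
  qed
qed

end
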